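(* For every $n\ge0$, $$e_n(c)=\frac{n!}{(2n-1)!!}\prod_{m=1}^n\Big(c-\frac{m^2-1}4\Big),$$ where $e_n(c)\in\mathbb C[c]$ is obtained by substituting $y=c$ into $e_n(y)\in\mathbb C[c][y]$ (and $(-1)!!=1$).
   Context: Chord diagrams and $w_{\mathfrak{sl}_2}(D)=\sum_\varphi x_{\varphi(p_1)}\cdots x_{\varphi(p_{2n})}\in\mathbb C[c]$ ($x_1,x_2,x_3$ the basis $\tfrac12\begin{pmatrix}0&1\\1&0\end{pmatrix},\tfrac12\begin{pmatrix}0&-i\\ i&0\end{pmatrix},\tfrac12\begin{pmatrix}1&0\\0&-1\end{pmatrix}$ of $\mathfrak{sl}_2$, $c=\sum x_i^2$, $p_i$ endpoints in order from a cut point, $\varphi$ over maps chords$\to\{1,2,3\}$). A share: two oriented intervals (strand 1, strand 2) with finitely many chords, up to orientation-preserving diffeomorphisms of each strand. Join $(I,H)$: chord diagram whose circle reads strand 1 of $I$, strand 1 of $H$, strand 2 of $I$, strand 2 of $H$. $\mathcal S$: quotient of the $\mathbb C$-span of shares by $I\sim I'$ iff $w_{\mathfrak{sl}_2}((I,H))=w_{\mathfrak{sl}_2}((I',H))$ for all $H$. Cross product $I\times H$: strand 1 = strand 1 of $I$ then strand 1 of $H$; strand 2 = strand 2 of $H$ then strand 2 of $I$; it gives $\mathcal S\cong\mathbb C[c][y]$ with $c$ the class of a one-arch share and $y$ of the one-bridge share. $U$: the operator on $\mathcal S$ adding an arch on strand 1 whose endpoints precede and follow all other endpoints on strand 1.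 For $m\ge0$, $e_m\in\mathcal S$ is the unique monic polynomial in $y$ of degree $m$ (coefficients in $\mathbb C[c]$) with $Ue_m=(c-\frac{m(m+1)}2)e_m$. *)

theory Defs
  imports Complex_Main "HOL-Computational_Algebra.Polynomial" "HOL-Library.FuncSet"
begin

text \<open>A chord diagram (cut at a point) is its word of chord endpoints: a list of chord labels,
  each label occurring exactly twice.  The sl2 weight system is evaluated in the irreducible
  representation V_k of sl2 (dimension k+1, basis v_0..v_k), where H v_j = (k-2j) v_j,
  E v_j = j(k-j+1) v_(j-1), F v_j = v_(j+1).  The basis elements are
  x_1 = (E+F)/2, x_2 = i(F-E)/2, x_3 = H/2 (indices a = 0,1,2 here);
  for k = 1 these are exactly the matrices of the paper.\<close>

definition rho :: "nat \<Rightarrow> nat \<Rightarrow> nat \<Rightarrow> nat \<Rightarrow> complex" where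
  "rho k a i j =
     (let E = (if i + 1 = j then of_nat (j * (k + 1 - j)) else 0);
          F = (if i = j + 1 then 1 else 0);
          H = (if i = j then of_int (int k - 2 * int j) else 0)
      in if a = 0 then (E + F) / 2
         else if a = 1 then \<i> * (F - E) / 2
         else H / 2)"

fun wordmat :: "nat \<Rightarrow> (nat \<Rightarrow> nat) \<Rightarrow> nat list \<Rightarrow> nat \<Rightarrow> nat \<Rightarrow> complex" where
  "wordmat k \<phi> [] i j = (if i = j then 1 else 0)"
| "wordmat k \<phi> (l # w) i j = (\<Sum>m\<le>k. rho k (\<phi> l) i m * wordmat k \<phi> w m j)"

definition wsl2 :: "nat \<Rightarrow> nat list \<Rightarrow> nat \<Rightarrow> nat \<Rightarrow> complex" where
  "wsl2 k D i j = (\<Sum>\<phi> \<in> PiE (set D) (\<lambda>_. {0, 1, 2}). wordmat k \<phi> D i j)"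

text \<open>A share: (strand 1, strand 2), each a list of chord labels read along the orientation;
  each label occurs exactly twice in total.\<close>
type_synonym share = "nat list \<times> nat list"

definition is_share :: "share \<Rightarrow> bool" where
  "is_share s = (\<forall>l. count_list (fst s @ snd s) l \<in> {0, 2})"

definition relL :: "nat \<Rightarrow> nat" where "relL l = 2 * l"
definition relR :: "nat \<Rightarrow> nat" where "relR l = 2 * l + 1"

definition join :: "share \<Rightarrow> share \<Rightarrow> nat list" where
  "join I H = map relL (fst I) @ map relR (fst H) @ map relL (snd I) @ map relR (snd H)"

definition cross :: "share \<Rightarrow> share \<Rightarrow> share" where
  "cross I H = (map relL (fst I) @ map relR (fst H), map relR (snd H) @ map relL (snd I))"

definition arch :: share where "arch = ([0, 0], [])"
definition bridge :: share where "bridge = ([0], [0])"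

fun cross_pow :: "share \<Rightarrow> nat \<Rightarrow> share" where
  "cross_pow s 0 = ([], [])"
| "cross_pow s (Suc n) = cross s (cross_pow s n)"

text \<open>The share representing the monomial c^i y^j.\<close>
definition mono :: "nat \<Rightarrow> nat \<Rightarrow> share" where
  "mono i j = cross (cross_pow arch i) (cross_pow bridge j)"

type_synonym comb = "(complex \<times> share) list"

text \<open>The class in S of a combination: I ~ I' iff w_sl2((I,H)) = w_sl2((I',H)) for all H;
  equality in U(sl2) is tested in all irreducible representations V_k.
  Only genuine shares H are tested.\<close>
definition cls :: "comb \<Rightarrow> share \<Rightarrow> nat \<Rightarrow> nat \<Rightarrow> nat \<Rightarrow> complex" where
  "cls X = (\<lambda>H k i j. if is_share H then (\<Sum>(a, I) \<leftarrow> X. a * wsl2 k (join I H) i j) else 0)"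

text \<open>The operator U: add an arch on strand 1 enclosing all other endpoints on strand 1.\<close>
definition Ush :: "share \<Rightarrow> share" where
  "Ush s = (0 # map Suc (fst s) @ [0], map Suc (snd s))"

definition Uop :: "comb \<Rightarrow> comb" where
  "Uop X = map (\<lambda>(a, I). (a, Ush I)) X"

text \<open>The element of S corresponding to a polynomial in C[c][y] (iso S = C[c][y]).\<close>
definition realize :: "complex poly poly \<Rightarrow> comb" where
  "realize q = [(coeff (coeff q j) i, mono i j). j \<leftarrow> [0..<Suc (degree q)],
                                               i \<leftarrow> [0..<Suc (degree (coeff q j))]]"

end

theory Submission
  imports Defs "HOL-Library.Function_Algebras"
begin

type_synonym cmat = "nat \<Rightarrow> nat \<Rightarrow> complex"

definition mm :: "nat \<Rightarrow> cmat \<Rightarrow> cmat \<Rightarrow> cmat" where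
  "mm k A B = (\<lambda>i j. if i \<le> k \<and> j \<le> k then (\<Sum>m\<le>k. A i m * B m j) else 0)"
definition Ik :: "nat \<Rightarrow> cmat" where "Ik k = (\<lambda>i j. if i = j \<and> i \<le> k then 1 else 0)"
definition isr :: "nat \<Rightarrow> cmat \<Rightarrow> bool" where "isr k A \<longleftrightarrow> (\<forall>i j. k < i \<or> k < j \<longrightarrow> A i j = 0)"
definition sm :: "complex \<Rightarrow> cmat \<Rightarrow> cmat" where "sm a A = (\<lambda>i j. a * A i j)"
definition tr :: "nat \<Rightarrow> cmat \<Rightarrow> complex" where "tr k A = (\<Sum>i\<le>k. A i i)"

lemma cmat_zero_refold[simp]: "(\<lambda>a b. (0::complex)) = (0::cmat)"
  by (simp add: fun_eq_iff)
lemma cmat_plus_refold[simp]: "(\<lambda>a b. A a b + B a b) = (A + B :: cmat)"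
  by (simp add: fun_eq_iff)

lemma cmat_minus_refold[simp]: "(\<lambda>a b. A a b - B a b) = (A - B :: cmat)"
  by (simp add: fun_eq_iff)
lemma cmat_uminus_refold[simp]: "(\<lambda>a b. - A a b) = (- A :: cmat)"
  by (simp add: fun_eq_iff)

lemma sum_fun_apply: "(\<Sum>x\<in>S. f x) i = (\<Sum>x\<in>S. f x i)"
  by (induction S rule: infinite_finite_induct) auto

lemma mm_apply: "mm k A B i j = (if i \<le> k \<and> j \<le> k then (\<Sum>m\<le>k. A i m * B m j) else 0)"
  by (simp add: mm_def)

lemma mm_assoc: "mm k (mm k A B) C = mm k A (mm k B C)"
proof (intro ext)
  fix i j
  show "mm k (mm k A B) C i j = mm k A (mm k B C) i j"
  proof (cases "i \<le> k \<and> j \<le> k")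
    case True
    have "mm k (mm k A B) C i j = (\<Sum>m\<le>k. (\<Sum>p\<le>k. A i p * B p m) * C m j)"
      using True by (simp add: mm_def)
    also have "\<dots> = (\<Sum>m\<le>k. \<Sum>p\<le>k. A i p * B p m * C m j)"
      by (simp add: sum_distrib_right)
    also have "\<dots> = (\<Sum>p\<le>k. \<Sum>m\<le>k. A i p * B p m * C m j)"
      by (rule sum.swap)
    also have "\<dots> = (\<Sum>p\<le>k. A i p * (\<Sum>m\<le>k. B p m * C m j))"
      by (simp add: sum_distrib_left mult.assoc)
    also have "\<dots> = mm k A (mm k B C) i j"
      using True by (simp add: mm_def)
    finally show ?thesis .
  qed (auto simp: mm_def)
qed

lemma mm_add_right: "mm k A (B + C) = mm k A B + mm k A C"
  by (auto simp: mm_def fun_eq_iff distrib_left sum.distrib)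
lemma mm_add_left: "mm k (A + B) C = mm k A C + mm k B C"
  by (auto simp: mm_def fun_eq_iff distrib_right sum.distrib)
lemma mm_diff_right: "mm k A (B - C) = mm k A B - mm k A C"
  by (auto simp: mm_def fun_eq_iff right_diff_distrib sum_subtractf)
lemma mm_diff_left: "mm k (A - B) C = mm k A C - mm k B C"
  by (auto simp: mm_def fun_eq_iff left_diff_distrib sum_subtractf)
lemma mm_uminus_right: "mm k A (- B) = - mm k A B"
  by (auto simp: mm_def fun_eq_iff sum_negf)
lemma mm_uminus_left: "mm k (- A) B = - mm k A B"
  by (auto simp: mm_def fun_eq_iff sum_negf)
lemma mm_sm_right: "mm k A (sm a B) = sm a (mm k A B)"
  by (auto simp: mm_def sm_def fun_eq_iff sum_distrib_left mult.left_commute)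
lemma mm_sm_left: "mm k (sm a A) B = sm a (mm k A B)"
  by (auto simp: mm_def sm_def fun_eq_iff sum_distrib_left mult.assoc)
lemma mm_zero_right[simp]: "mm k A 0 = 0"
  by (auto simp: mm_def fun_eq_iff)
lemma mm_zero_left[simp]: "mm k 0 A = 0"
  by (auto simp: mm_def fun_eq_iff)
lemma mm_sum_right: "mm k A (\<Sum>x\<in>S. f x) = (\<Sum>x\<in>S. mm k A (f x))"
  by (auto simp: fun_eq_iff mm_def sum_fun_apply sum_distrib_left intro: sum.swap)
lemma mm_sum_left: "mm k (\<Sum>x\<in>S. f x) A = (\<Sum>x\<in>S. mm k (f x) A)"
  by (auto simp: fun_eq_iff mm_def sum_fun_apply sum_distrib_right intro: sum.swap)

lemma sm_add: "sm a (A + B) = sm a A + sm a B"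
  by (auto simp: sm_def fun_eq_iff distrib_left)
lemma sm_diff: "sm a (A - B) = sm a A - sm a B"
  by (auto simp: sm_def fun_eq_iff right_diff_distrib)
lemma sm_sm: "sm a (sm b A) = sm (a * b) A"
  by (auto simp: sm_def fun_eq_iff)
lemma sm_add_left: "sm (a + b) A = sm a A + sm b A"
  by (auto simp: sm_def fun_eq_iff distrib_right)
lemma sm_one[simp]: "sm 1 A = A"
  by (auto simp: sm_def fun_eq_iff)
lemma sm_zero[simp]: "sm 0 A = 0" "sm a 0 = 0"
  by (auto simp: sm_def fun_eq_iff)
lemma sm_sum: "sm a (\<Sum>x\<in>S. f x) = (\<Sum>x\<in>S. sm a (f x))"
  by (auto simp: fun_eq_iff sm_def sum_fun_apply sum_distrib_left)

lemma isr_mm[simp]: "isr k (mm k A B)"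
  by (auto simp: isr_def mm_def)
lemma isr_Ik[simp]: "isr k (Ik k)"
  by (auto simp: isr_def Ik_def)
lemma isr_add[simp]: "isr k A \<Longrightarrow> isr k B \<Longrightarrow> isr k (A + B)"
  by (auto simp: isr_def)
lemma isr_diff[simp]: "isr k A \<Longrightarrow> isr k B \<Longrightarrow> isr k (A - B)"
  by (auto simp: isr_def)
lemma isr_sm[simp]: "isr k A \<Longrightarrow> isr k (sm a A)"
  by (auto simp: isr_def sm_def)
lemma isr_zero[simp]: "isr k 0"
  by (auto simp: isr_def)
lemma isr_sum[simp]: "(\<And>x. x \<in> S \<Longrightarrow> isr k (f x)) \<Longrightarrow> isr k (\<Sum>x\<in>S. f x)"
  by (auto simp: isr_def sum_fun_apply)

lemma mm_Ik_left: "isr k A \<Longrightarrow> mm k (Ik k) A = A"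
proof (intro ext)
  fix i j assume "isr k A"
  show "mm k (Ik k) A i j = A i j"
  proof (cases "i \<le> k \<and> j \<le> k")
    case True
    have "(\<Sum>m\<le>k. (if i = m then 1 else 0) * A m j) = (\<Sum>m\<le>k. if i = m then A m j else 0)"
      by (rule sum.cong) auto
    also have "\<dots> = A i j" using True by (simp add: sum.delta)
    finally show ?thesis using True by (simp add: mm_def Ik_def)
  qed (use \<open>isr k A\<close> in \<open>auto simp: mm_def isr_def\<close>)
qed

lemma mm_Ik_right: "isr k A \<Longrightarrow> mm k A (Ik k) = A"
proof (intro ext)
  fix i j assume "isr k A"
  show "mm k A (Ik k) i j = A i j"
  proof (cases "i \<le> k \<and> j \<le> k")
    case True
    have "(\<Sum>m\<le>k. A i m * (if m = j then 1 else 0)) = (\<Sum>m\<le>k. if j = m then A i m else 0)"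
      by (rule sum.cong) auto
    also have "\<dots> = A i j" using True by (simp add: sum.delta)
    finally show ?thesis using True by (simp add: mm_def Ik_def)
  qed (use \<open>isr k A\<close> in \<open>auto simp: mm_def isr_def\<close>)
qed

lemma tr_add: "tr k (A + B) = tr k A + tr k B"
  by (simp add: tr_def sum.distrib)
lemma tr_diff: "tr k (A - B) = tr k A - tr k B"
  by (simp add: tr_def sum_subtractf)
lemma tr_sm: "tr k (sm a A) = a * tr k A"
  by (simp add: tr_def sm_def sum_distrib_left)
lemma tr_sum: "tr k (\<Sum>x\<in>S. f x) = (\<Sum>x\<in>S. tr k (f x))"
  by (simp add: tr_def sum_fun_apply sum.swap[of _ S])
lemma tr_zero[simp]: "tr k 0 = 0" by (simp add: tr_def)
lemma tr_Ik: "tr k (Ik k) = of_nat (k + 1)"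
  by (simp add: tr_def Ik_def)
lemma tr_mm_comm: "tr k (mm k A B) = tr k (mm k B A)"
proof -
  have "tr k (mm k A B) = (\<Sum>i\<le>k. \<Sum>m\<le>k. A i m * B m i)" by (simp add: tr_def mm_def)
  also have "\<dots> = (\<Sum>m\<le>k. \<Sum>i\<le>k. B m i * A i m)" by (subst sum.swap) (simp add: mult.commute)
  also have "\<dots> = tr k (mm k B A)" by (simp add: tr_def mm_def)
  finally show ?thesis .
qed

definition Em :: "nat \<Rightarrow> cmat" where
  "Em k = (\<lambda>i j. if i \<le> k \<and> j \<le> k \<and> i + 1 = j then of_nat (j * (k + 1 - j)) else 0)"
definition Fm :: "nat \<Rightarrow> cmat" where
  "Fm k = (\<lambda>i j. if i \<le> k \<and> j \<le> k \<and> i = j + 1 then 1 else 0)"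
definition Hm :: "nat \<Rightarrow> cmat" where
  "Hm k = (\<lambda>i j. if i \<le> k \<and> j \<le> k \<and> i = j then of_int (int k - 2 * int j) else 0)"

lemma Em_apply: "Em k i j = (if i \<le> k \<and> j \<le> k \<and> i + 1 = j then of_nat j * (of_nat k + 1 - of_nat j) else 0)"
  by (simp add: Em_def of_nat_diff)

lemma Hm_apply: "Hm k i j = (if i \<le> k \<and> j \<le> k \<and> i = j then of_int (int k - 2 * int j) else 0)"
  by (simp add: Hm_def)

lemma isr_EFH[simp]: "isr k (Em k)" "isr k (Fm k)" "isr k (Hm k)"
  by (auto simp: isr_def Em_def Fm_def Hm_def)

lemma sum_single:
  fixes k p :: nat and f :: "nat \<Rightarrow> complex"
  assumes "\<And>m. m \<noteq> p \<Longrightarrow> f m = 0"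
  shows "(\<Sum>m\<le>k. f m) = (if p \<le> k then f p else (0::complex))"
proof -
  have "(\<Sum>m\<le>k. f m) = (\<Sum>m\<le>k. if m = p then f p else 0)"
    by (rule sum.cong) (use assms in auto)
  also have "\<dots> = (if p \<le> k then f p else 0)"
    using sum.delta[OF finite_atMost[of k], of p "\<lambda>_. f p"] by (simp add: atMost_iff)
  finally show ?thesis .
qed

lemma mmEF: "mm k (Em k) (Fm k) i j = (if i \<le> k \<and> j \<le> k \<and> i = j \<and> i + 1 \<le> k then (of_nat i + 1) * (of_nat k - of_nat i) else 0)"
proof -
  have "(\<Sum>m\<le>k. Em k i m * Fm k m j) = (if i + 1 \<le> k then Em k i (i+1) * Fm k (i+1) j else 0)"
    by (rule sum_single) (auto simp: Em_def)
  then show ?thesis by (auto simp: mm_def Em_apply Fm_def algebra_simps)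
qed

lemma mmFE: "mm k (Fm k) (Em k) i j = (if i \<le> k \<and> j \<le> k \<and> i = j \<and> 1 \<le> i then of_nat i * (of_nat k + 1 - of_nat i) else 0)"
proof -
  have "(\<Sum>m\<le>k. Fm k i m * Em k m j) = (if i - 1 \<le> k then Fm k i (i-1) * Em k (i-1) j else 0)"
    by (rule sum_single) (auto simp: Fm_def)
  then show ?thesis by (auto simp: mm_def Em_apply Fm_def)
qed

lemma mmHX: "mm k (Hm k) A i j = (if i \<le> k \<and> j \<le> k then of_int (int k - 2 * int i) * A i j else 0)"
proof -
  have "i \<le> k \<Longrightarrow> (\<Sum>m\<le>k. Hm k i m * A m j) = (if i \<le> k then Hm k i i * A i j else 0)"
    by (rule sum_single) (auto simp: Hm_def)
  then show ?thesis by (auto simp: mm_def Hm_def)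
qed

lemma mmXH: "mm k A (Hm k) i j = (if i \<le> k \<and> j \<le> k then A i j * of_int (int k - 2 * int j) else 0)"
proof -
  have "j \<le> k \<Longrightarrow> (\<Sum>m\<le>k. A i m * Hm k m j) = (if j \<le> k then A i j * Hm k j j else 0)"
    by (rule sum_single) (auto simp: Hm_def)
  then show ?thesis by (auto simp: mm_def Hm_def)
qed

lemma rel_EF: "mm k (Em k) (Fm k) = mm k (Fm k) (Em k) + Hm k"
proof (intro ext)
  fix i j
  show "mm k (Em k) (Fm k) i j = (mm k (Fm k) (Em k) + Hm k) i j"
  proof (cases "i \<le> k \<and> j \<le> k \<and> i = j")
    case True
    then have ij: "j = i" "i \<le> k" by auto
    consider "i = 0" | "i \<ge> 1 \<and> i + 1 \<le> k" | "i = k \<and> 1 \<le> i" using ij by linarith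
    then show ?thesis
    proof cases
      case 1 then show ?thesis using ij by (simp add: mmEF mmFE Hm_def)
    next
      case 2
      then show ?thesis using ij 2
        by (simp add: mmEF mmFE Hm_def algebra_simps)
    next
      case 3 then show ?thesis using ij by (simp add: mmEF mmFE Hm_def algebra_simps)
    qed
  qed (auto simp: mmEF mmFE Hm_def)
qed

lemma rel_HE: "mm k (Hm k) (Em k) = mm k (Em k) (Hm k) + sm 2 (Em k)"
  by (auto simp: fun_eq_iff mmHX mmXH sm_def Em_def algebra_simps)

lemma rel_HF: "mm k (Hm k) (Fm k) = mm k (Fm k) (Hm k) - sm 2 (Fm k)"
  by (auto simp: fun_eq_iff mmHX mmXH sm_def Fm_def algebra_simps)

definition C4 :: "nat \<Rightarrow> cmat" where
  "C4 k = sm 4 (mm k (Fm k) (Em k)) + sm 2 (Hm k) + mm k (Hm k) (Hm k)"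

lemma C4_eq: "C4 k = sm (of_nat (k * (k + 2))) (Ik k)"
proof (intro ext)
  fix i j
  have HH: "\<And>i j. mm k (Hm k) (Hm k) i j = (if i \<le> k \<and> j \<le> k then of_int (int k - 2 * int i) * Hm k i j else 0)"
    by (rule mmHX)
  show "C4 k i j = sm (of_nat (k * (k + 2))) (Ik k) i j"
  proof (cases "i \<le> k \<and> j \<le> k \<and> i = j")
    case True
    then have ij: "j = i" "i \<le> k" by auto
    show ?thesis
      using ij by (cases "i = 0") (simp_all add: C4_def HH mmFE sm_def Hm_apply Ik_def algebra_simps power2_eq_square)
  qed (auto simp: C4_def HH mmFE sm_def Hm_apply Ik_def)
qed

datatype lt = LE | LF | LH | LZ

fun ltm :: "nat \<Rightarrow> cmat \<Rightarrow> lt \<Rightarrow> cmat" where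
  "ltm k Z LE = Em k" | "ltm k Z LF = Fm k" | "ltm k Z LH = Hm k" | "ltm k Z LZ = Z"

fun evw :: "nat \<Rightarrow> cmat \<Rightarrow> lt list \<Rightarrow> cmat" where
  "evw k Z [] = Ik k" | "evw k Z (x # w) = mm k (ltm k Z x) (evw k Z w)"

definition evp :: "nat \<Rightarrow> cmat \<Rightarrow> (int \<times> lt list) list \<Rightarrow> cmat" where
  "evp k Z p = sum_list (map (\<lambda>(c,w). sm (of_int c) (evw k Z w)) p)"

lemma evp_Nil[simp]: "evp k Z [] = 0" by (simp add: evp_def)
lemma evp_Cons[simp]: "evp k Z ((c,w) # p) = sm (of_int c) (evw k Z w) + evp k Z p"
  by (simp add: evp_def)
lemma evp_append[simp]: "evp k Z (p @ q) = evp k Z p + evp k Z q"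
  by (simp add: evp_def)

lemma isr_evw[simp]: "isr k (evw k Z w)"
  by (cases w) auto

lemma isr_sum_list: "(\<And>x. x \<in> set xs \<Longrightarrow> isr k x) \<Longrightarrow> isr k (sum_list xs)"
  by (induction xs) auto

lemma isr_evp[simp]: "isr k (evp k Z p)"
  unfolding evp_def by (rule isr_sum_list) auto

lemma mm_sum_list_right: "mm k A (sum_list xs) = sum_list (map (mm k A) xs)"
  by (induction xs) (simp_all add: mm_add_right)
lemma mm_sum_list_left: "mm k (sum_list xs) A = sum_list (map (\<lambda>x. mm k x A) xs)"
  by (induction xs) (simp_all add: mm_add_left)
lemma sm_sum_list: "sm a (sum_list xs) = sum_list (map (sm a) xs)"
  by (induction xs) (simp_all add: sm_add)

lemma evw_append: "evw k Z (u @ w) = mm k (evw k Z u) (evw k Z w)"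
  by (induction u) (auto simp: mm_Ik_left mm_assoc)


fun rwh :: "lt \<Rightarrow> lt list \<Rightarrow> (int \<times> lt list) list option" where
  "rwh LE (LF # w) = Some [(1, LF # LE # w), (1, LH # w)]"
| "rwh LE (LH # w) = Some [(1, LH # LE # w), (-2, LE # w)]"
| "rwh LH (LF # w) = Some [(1, LF # LH # w), (-2, LF # w)]"
| "rwh x w = None"

fun rw1 :: "lt list \<Rightarrow> (int \<times> lt list) list option" where
  "rw1 [] = None"
| "rw1 (x # w) = (case rwh x w of Some p \<Rightarrow> Some p
     | None \<Rightarrow> map_option (map (\<lambda>(c,u). (c, x # u))) (rw1 w))"

lemma evp_map_cons: "evp k Z (map (\<lambda>(c,u). (c, x # u)) p) = mm k (ltm k Z x) (evp k Z p)"
  unfolding evp_def mm_sum_list_right map_map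
  by (rule arg_cong[where f=sum_list], rule map_cong) (auto simp: mm_sm_right)

lemma rwh_sound: "rwh x w = Some p \<Longrightarrow> evp k Z p = evw k Z (x # w)"
proof (induction x w rule: rwh.induct)
  case (1 w)
  then have p: "p = [(1, LF # LE # w), (1, LH # w)]" by simp
  show ?case unfolding p
    by (simp add: rel_EF mm_assoc[symmetric] mm_add_left)
next
  case (2 w)
  then have p: "p = [(1, LH # LE # w), (-2, LE # w)]" by simp
  have "evp k Z p = mm k (Hm k) (mm k (Em k) (evw k Z w)) + sm (- 2) (mm k (Em k) (evw k Z w))"
    unfolding p by simp
  also have "\<dots> = evw k Z (LE # LH # w)"
    by (simp add: rel_HE mm_assoc[symmetric] mm_add_left mm_sm_left, simp add: sm_def fun_eq_iff)
  finally show ?case .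
next
  case (3 w)
  then have p: "p = [(1, LF # LH # w), (-2, LF # w)]" by simp
  have "evp k Z p = mm k (Fm k) (mm k (Hm k) (evw k Z w)) + sm (- 2) (mm k (Fm k) (evw k Z w))"
    unfolding p by simp
  also have "\<dots> = evw k Z (LH # LF # w)"
    by (simp add: rel_HF mm_assoc[symmetric] mm_diff_left mm_sm_left, simp add: sm_def fun_eq_iff)
  finally show ?case .
qed auto

lemma rw1_sound: "rw1 w = Some p \<Longrightarrow> evp k Z p = evw k Z w"
proof (induction w arbitrary: p)
  case Nil then show ?case by simp
next
  case (Cons x w)
  show ?case
  proof (cases "rwh x w")
    case (Some q)
    with Cons.prems show ?thesis by (simp add: rwh_sound)
  next
    case None
    with Cons.prems obtain q where q: "rw1 w = Some q" "p = map (\<lambda>(c,u). (c, x # u)) q"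
      by auto
    then show ?thesis using Cons.IH[OF q(1)] by (simp add: evp_map_cons)
  qed
qed

definition scl :: "int \<Rightarrow> (int \<times> lt list) list \<Rightarrow> (int \<times> lt list) list" where
  "scl a p = map (\<lambda>(c,u). (a*c, u)) p"

lemma evp_scl[simp]: "evp k Z (scl a p) = sm (of_int a) (evp k Z p)"
  unfolding evp_def scl_def sm_sum_list map_map
  by (rule arg_cong[where f=sum_list], rule map_cong) (auto simp: sm_sm)

fun nfw :: "nat \<Rightarrow> lt list \<Rightarrow> (int \<times> lt list) list" where
  "nfw 0 w = [(1,w)]"
| "nfw (Suc n) w = (case rw1 w of None \<Rightarrow> [(1,w)]
      | Some p \<Rightarrow> concat (map (\<lambda>(c,u). scl c (nfw n u)) p))"

lemma evp_concat: "evp k Z (concat xs) = sum_list (map (evp k Z) xs)"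
  by (induction xs) auto

lemma evp_concat_scl: "evp k Z (concat (map (\<lambda>(c,u). scl c (f u)) p)) = evp k Z p"
  if "\<And>c u. (c,u) \<in> set p \<Longrightarrow> evp k Z (f u) = evw k Z u"
  using that
proof (induction p)
  case Nil then show ?case by simp
next
  case (Cons a p)
  obtain c u where a: "a = (c,u)" by (cases a)
  have "evp k Z (f u) = evw k Z u" using Cons.prems a by auto
  moreover have "evp k Z (concat (map (\<lambda>(c, u). scl c (f u)) p)) = evp k Z p"
    using Cons by auto
  ultimately show ?case by (simp add: a)
qed

lemma nfw_sound: "evp k Z (nfw n w) = evw k Z w"
proof (induction n arbitrary: w)
  case 0 then show ?case by simp
next
  case (Suc n)
  show ?case
  proof (cases "rw1 w")
    case None then show ?thesis by simp
  next
    case (Some p)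
    then have "evp k Z (nfw (Suc n) w) = evp k Z p"
      by (simp add: evp_concat_scl Suc.IH)
    also have "\<dots> = evw k Z w" using Some by (rule rw1_sound)
    finally show ?thesis .
  qed
qed

definition nfp :: "nat \<Rightarrow> (int \<times> lt list) list \<Rightarrow> (int \<times> lt list) list" where
  "nfp n p = concat (map (\<lambda>(c,u). scl c (nfw n u)) p)"

lemma nfp_sound: "evp k Z (nfp n p) = evp k Z p"
  unfolding nfp_def by (rule evp_concat_scl) (rule nfw_sound)

fun lcode :: "lt \<Rightarrow> nat" where "lcode LF = 0" | "lcode LH = 1" | "lcode LE = 2" | "lcode LZ = 3"

fun wless :: "lt list \<Rightarrow> lt list \<Rightarrow> bool" where
  "wless [] [] = False" | "wless [] _ = True" | "wless _ [] = False"
| "wless (x#xs) (y#ys) = (lcode x < lcode y \<or> (x = y \<and> wless xs ys))"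

fun ins :: "int \<times> lt list \<Rightarrow> (int \<times> lt list) list \<Rightarrow> (int \<times> lt list) list" where
  "ins (c,w) [] = [(c,w)]"
| "ins (c,w) ((d,u) # p) = (if w = u then (c+d,u) # p
     else if wless w u then (c,w) # (d,u) # p else (d,u) # ins (c,w) p)"

lemma evp_ins: "evp k Z (ins (c,w) p) = sm (of_int c) (evw k Z w) + evp k Z p"
proof (induction p)
  case Nil then show ?case by simp
next
  case (Cons a p)
  obtain d u where a: "a = (d,u)" by (cases a)
  show ?case
    using Cons by (auto simp: a sm_add_left add_ac)
qed

definition coll :: "(int \<times> lt list) list \<Rightarrow> (int \<times> lt list) list" where
  "coll p = filter (\<lambda>x. fst x \<noteq> 0) (foldr ins p [])"

lemma evp_foldr_ins: "evp k Z (foldr ins p []) = evp k Z p"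
proof (induction p)
  case Nil then show ?case by simp
next
  case (Cons a p)
  obtain d u where a: "a = (d,u)" by (cases a)
  show ?case using Cons by (simp add: a evp_ins)
qed

lemma evp_filter0: "evp k Z (filter (\<lambda>x. fst x \<noteq> 0) p) = evp k Z p"
proof (induction p)
  case Nil then show ?case by simp
next
  case (Cons a p)
  obtain d u where a: "a = (d,u)" by (cases a)
  show ?case using Cons by (simp add: a)
qed

lemma checker:
  assumes "coll (nfp n (P @ scl (-1) Q)) = []"
  shows "evp k Z P = evp k Z Q"
proof -
  have "evp k Z (P @ scl (-1) Q) = 0"
    using arg_cong[OF assms, of "evp k Z"]
    unfolding coll_def evp_filter0 evp_foldr_ins nfp_sound by simp
  then have "evp k Z P + sm (-1) (evp k Z Q) = 0" by simp
  then show ?thesis by (simp add: sm_def fun_eq_iff add_eq_0_iff)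
qed

definition lmul :: "lt list \<Rightarrow> (int \<times> lt list) list \<Rightarrow> (int \<times> lt list) list" where
  "lmul w p = map (\<lambda>(c,u). (c, w @ u)) p"
definition rmul :: "(int \<times> lt list) list \<Rightarrow> lt list \<Rightarrow> (int \<times> lt list) list" where
  "rmul p w = map (\<lambda>(c,u). (c, u @ w)) p"
definition pm :: "(int \<times> lt list) list \<Rightarrow> (int \<times> lt list) list \<Rightarrow> (int \<times> lt list) list" where
  "pm p q = concat (map (\<lambda>(c,u). scl c (lmul u q)) p)"

lemma evp_lmul[simp]: "evp k Z (lmul w p) = mm k (evw k Z w) (evp k Z p)"
  unfolding evp_def lmul_def mm_sum_list_right map_map
  by (rule arg_cong[where f=sum_list], rule map_cong) (auto simp: mm_sm_right evw_append)

lemma evp_rmul[simp]: "evp k Z (rmul p w) = mm k (evp k Z p) (evw k Z w)"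
  unfolding evp_def rmul_def mm_sum_list_left map_map
  by (rule arg_cong[where f=sum_list], rule map_cong) (auto simp: mm_sm_left evw_append)

lemma evp_pm[simp]: "evp k Z (pm p q) = mm k (evp k Z p) (evp k Z q)"
proof (induction p)
  case Nil then show ?case by (simp add: pm_def)
next
  case (Cons a p)
  obtain d u where a: "a = (d,u)" by (cases a)
  show ?case using Cons by (simp add: a pm_def evp_concat mm_add_left mm_sm_left)
qed

lemma evw_single[simp]: "evw k Z [LE] = Em k" "evw k Z [LF] = Fm k" "evw k Z [LH] = Hm k"
  "isr k Z \<Longrightarrow> evw k Z [LZ] = Z"
  by (simp_all add: mm_Ik_right)

definition Om4 :: "nat \<Rightarrow> cmat \<Rightarrow> cmat" where
  "Om4 k W = sm 2 (mm k (Em k) (mm k W (Fm k))) + sm 2 (mm k (Fm k) (mm k W (Em k))) + mm k (Hm k) (mm k W (Hm k))"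

definition OmP :: "(int \<times> lt list) list \<Rightarrow> (int \<times> lt list) list" where
  "OmP p = scl 2 (lmul [LE] (rmul p [LF])) @ scl 2 (lmul [LF] (rmul p [LE])) @ lmul [LH] (rmul p [LH])"

lemma evp_OmP[simp]: "evp k Z (OmP p) = Om4 k (evp k Z p)"
  by (simp add: OmP_def Om4_def add.assoc mm_Ik_right)

definition "Zp = [(1::int, [LZ])]"
definition "CP = [(4::int, [LF, LE]), (2, [LH]), (1, [LH, LH])]"

lemma evp_Zp[simp]: "isr k Z \<Longrightarrow> evp k Z Zp = Z"
  by (simp add: Zp_def mm_Ik_right)

lemma evp_CP[simp]: "evp k Z CP = C4 k"
  by (simp add: CP_def C4_def mm_Ik_right add.assoc)

lemma evp_single[simp]: "evp k Z [(1, [LE])] = Em k" "evp k Z [(1, [LF])] = Fm k" "evp k Z [(1, [LH])] = Hm k"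
  by (simp_all add: mm_Ik_right)

lemma test_dirac: "coll (nfp 40 (OmP (OmP (rmul Zp [LE])) @ scl (-2) (OmP (rmul (OmP Zp) [LE])) @ rmul (OmP (OmP Zp)) [LE]
   @ scl 4 (OmP (lmul [LE] Zp)) @ scl 4 (rmul (OmP Zp) [LE]) @ scl (-4) (pm CP (rmul Zp [LE])) @ scl (-4) (pm (lmul [LE] Zp) CP))) = []"
  by code_simp

lemma sm_m1[simp]: "sm (-1) X = - X" by (simp add: sm_def fun_eq_iff)

lemma comm_E: assumes "isr k Z"
  shows "Om4 k (mm k Z (Em k)) - Om4 k (mm k (Em k) Z) = mm k (Om4 k Z) (Em k) - mm k (Em k) (Om4 k Z)"
proof -
  have "evp k Z (OmP (rmul Zp [LE]) @ scl (-1) (OmP (lmul [LE] Zp))) =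
        evp k Z (rmul (OmP Zp) [LE] @ scl (-1) (lmul [LE] (OmP Zp)))"
    by (rule checker[of 40]) code_simp
  then show ?thesis using assms by (simp add: mm_Ik_right)
qed

lemma comm_F: assumes "isr k Z"
  shows "Om4 k (mm k Z (Fm k)) - Om4 k (mm k (Fm k) Z) = mm k (Om4 k Z) (Fm k) - mm k (Fm k) (Om4 k Z)"
proof -
  have "evp k Z (OmP (rmul Zp [LF]) @ scl (-1) (OmP (lmul [LF] Zp))) =
        evp k Z (rmul (OmP Zp) [LF] @ scl (-1) (lmul [LF] (OmP Zp)))"
    by (rule checker[of 40]) code_simp
  then show ?thesis using assms by (simp add: mm_Ik_right)
qed

lemma comm_H: assumes "isr k Z"
  shows "Om4 k (mm k Z (Hm k)) - Om4 k (mm k (Hm k) Z) = mm k (Om4 k Z) (Hm k) - mm k (Hm k) (Om4 k Z)"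
proof -
  have "evp k Z (OmP (rmul Zp [LH]) @ scl (-1) (OmP (lmul [LH] Zp))) =
        evp k Z (rmul (OmP Zp) [LH] @ scl (-1) (lmul [LH] (OmP Zp)))"
    by (rule checker[of 40]) code_simp
  then show ?thesis using assms by (simp add: mm_Ik_right)
qed

lemma dirac_E: assumes "isr k Z"
  shows "Om4 k (Om4 k (mm k Z (Em k))) + sm (-2) (Om4 k (mm k (Om4 k Z) (Em k))) + mm k (Om4 k (Om4 k Z)) (Em k)
   = sm 4 (mm k (C4 k) (mm k Z (Em k))) + sm 4 (mm k (mm k (Em k) Z) (C4 k)) + sm (-4) (Om4 k (mm k (Em k) Z)) + sm (-4) (mm k (Om4 k Z) (Em k))"
proof -
  have "evp k Z (OmP (OmP (rmul Zp [LE])) @ scl (-2) (OmP (rmul (OmP Zp) [LE])) @ rmul (OmP (OmP Zp)) [LE]) =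
        evp k Z (scl 4 (pm CP (rmul Zp [LE])) @ scl 4 (pm (lmul [LE] Zp) CP) @ scl (-4) (OmP (lmul [LE] Zp)) @ scl (-4) (rmul (OmP Zp) [LE]))"
    by (rule checker[of 40]) code_simp
  then show ?thesis using assms by (simp add: add.assoc mm_Ik_right)
qed

lemma dirac_F: assumes "isr k Z"
  shows "Om4 k (Om4 k (mm k Z (Fm k))) + sm (-2) (Om4 k (mm k (Om4 k Z) (Fm k))) + mm k (Om4 k (Om4 k Z)) (Fm k)
   = sm 4 (mm k (C4 k) (mm k Z (Fm k))) + sm 4 (mm k (mm k (Fm k) Z) (C4 k)) + sm (-4) (Om4 k (mm k (Fm k) Z)) + sm (-4) (mm k (Om4 k Z) (Fm k))"
proof -
  have "evp k Z (OmP (OmP (rmul Zp [LF])) @ scl (-2) (OmP (rmul (OmP Zp) [LF])) @ rmul (OmP (OmP Zp)) [LF]) =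
        evp k Z (scl 4 (pm CP (rmul Zp [LF])) @ scl 4 (pm (lmul [LF] Zp) CP) @ scl (-4) (OmP (lmul [LF] Zp)) @ scl (-4) (rmul (OmP Zp) [LF]))"
    by (rule checker[of 40]) code_simp
  then show ?thesis using assms by (simp add: add.assoc mm_Ik_right)
qed

lemma dirac_H: assumes "isr k Z"
  shows "Om4 k (Om4 k (mm k Z (Hm k))) + sm (-2) (Om4 k (mm k (Om4 k Z) (Hm k))) + mm k (Om4 k (Om4 k Z)) (Hm k)
   = sm 4 (mm k (C4 k) (mm k Z (Hm k))) + sm 4 (mm k (mm k (Hm k) Z) (C4 k)) + sm (-4) (Om4 k (mm k (Hm k) Z)) + sm (-4) (mm k (Om4 k Z) (Hm k))"
proof -
  have "evp k Z (OmP (OmP (rmul Zp [LH])) @ scl (-2) (OmP (rmul (OmP Zp) [LH])) @ rmul (OmP (OmP Zp)) [LH]) =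
        evp k Z (scl 4 (pm CP (rmul Zp [LH])) @ scl 4 (pm (lmul [LH] Zp) CP) @ scl (-4) (OmP (lmul [LH] Zp)) @ scl (-4) (rmul (OmP Zp) [LH]))"
    by (rule checker[of 40]) code_simp
  then show ?thesis using assms by (simp add: add.assoc mm_Ik_right)
qed

lemma s4_0: assumes "isr k Z"
  shows "sm 2 (mm k (mm k Z (Em k)) (Fm k)) + sm 2 (mm k (mm k Z (Fm k)) (Em k)) + mm k (mm k Z (Hm k)) (Hm k) = mm k Z (C4 k)"
proof -
  have "evp k Z (scl 2 (rmul (rmul Zp [LE]) [LF]) @ scl 2 (rmul (rmul Zp [LF]) [LE]) @ rmul (rmul Zp [LH]) [LH]) =
        evp k Z (pm Zp CP)"
    by (rule checker[of 40]) code_simp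
  then show ?thesis using assms by (simp add: add.assoc mm_Ik_right)
qed

lemma s4_1: assumes "isr k Z"
  shows "sm 2 (mm k (Om4 k (mm k Z (Em k))) (Fm k)) + sm 2 (mm k (Om4 k (mm k Z (Fm k))) (Em k)) + mm k (Om4 k (mm k Z (Hm k))) (Hm k)
    = mm k (Om4 k Z) (C4 k) + sm (-4) (Om4 k Z)"
proof -
  have "evp k Z (scl 2 (rmul (OmP (rmul Zp [LE])) [LF]) @ scl 2 (rmul (OmP (rmul Zp [LF])) [LE]) @ rmul (OmP (rmul Zp [LH])) [LH]) =
        evp k Z (pm (OmP Zp) CP @ scl (-4) (OmP Zp))"
    by (rule checker[of 40]) code_simp
  then show ?thesis using assms by (simp add: add.assoc mm_Ik_right)
qed

lemma s4_2: assumes "isr k Z"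
  shows "sm 2 (mm k (Om4 k (Om4 k (mm k Z (Em k)))) (Fm k)) + sm 2 (mm k (Om4 k (Om4 k (mm k Z (Fm k)))) (Em k)) + mm k (Om4 k (Om4 k (mm k Z (Hm k)))) (Hm k)
    = mm k (Om4 k (Om4 k Z)) (C4 k) + sm (-12) (Om4 k (Om4 k Z)) + sm 16 (Om4 k Z) + sm 4 (mm k (mm k (C4 k) Z) (C4 k))"
proof -
  have "evp k Z (scl 2 (rmul (OmP (OmP (rmul Zp [LE]))) [LF]) @ scl 2 (rmul (OmP (OmP (rmul Zp [LF]))) [LE]) @ rmul (OmP (OmP (rmul Zp [LH]))) [LH]) =
        evp k Z (pm (OmP (OmP Zp)) CP @ scl (-12) (OmP (OmP Zp)) @ scl 16 (OmP Zp) @ scl 4 (pm (pm CP Zp) CP))"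
    by (rule checker[of 40]) code_simp
  then show ?thesis using assms by (simp add: add.assoc mm_Ik_right)
qed

definition cc :: "nat \<Rightarrow> complex" where "cc k = of_nat (k * (k + 2)) / 4"

definition Xm :: "nat \<Rightarrow> nat \<Rightarrow> cmat" where
  "Xm k a = (\<lambda>i j. if i \<le> k \<and> j \<le> k then rho k a i j else 0)"

lemma isr_Xm[simp]: "isr k (Xm k a)" by (simp add: isr_def Xm_def)

lemma Xm0: "Xm k 0 = sm (1/2) (Em k + Fm k)"
  by (auto simp: fun_eq_iff Xm_def rho_def sm_def Em_def Fm_def Let_def)
lemma Xm1: "Xm k 1 = sm (\<i>/2) (Fm k - Em k)"
  by (auto simp: fun_eq_iff Xm_def rho_def sm_def Em_def Fm_def Let_def)
lemma Xm2: "Xm k 2 = sm (1/2) (Hm k)"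
  by (auto simp: fun_eq_iff Xm_def rho_def sm_def Hm_def Let_def)

definition Omega :: "nat \<Rightarrow> cmat \<Rightarrow> cmat" where
  "Omega k Z = (\<Sum>a\<in>{0,1,2::nat}. mm k (Xm k a) (mm k Z (Xm k a)))"

definition SS :: "nat \<Rightarrow> (cmat \<Rightarrow> cmat) \<Rightarrow> cmat \<Rightarrow> cmat" where
  "SS k T Z = (\<Sum>a\<in>{0,1,2::nat}. mm k (T (mm k Z (Xm k a))) (Xm k a))"

lemma sum3: "(\<Sum>a\<in>{0,1,2::nat}. f a) = f 0 + f 1 + f 2"
  by (simp add: add.assoc)

lemmas mm_lin = mm_add_left mm_add_right mm_diff_left mm_diff_right mm_sm_left mm_sm_right

lemma Omega_eq: "Omega k Z = sm (1/4) (Om4 k Z)"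
  unfolding Omega_def sum3 Xm0 Xm1 Xm2 Om4_def
  by (simp add: mm_lin, simp add: fun_eq_iff sm_def algebra_simps)

lemma Om4_add: "Om4 k (A + B) = Om4 k A + Om4 k B"
  by (simp add: Om4_def mm_lin sm_add algebra_simps)
lemma Om4_diff: "Om4 k (A - B) = Om4 k A - Om4 k B"
  by (simp add: Om4_def mm_lin sm_diff algebra_simps)
lemma Om4_sm: "Om4 k (sm a A) = sm a (Om4 k A)"
  by (simp add: Om4_def mm_lin sm_add sm_sm mult.commute)
lemma isr_Om4[simp]: "isr k (Om4 k A)"
  by (simp add: Om4_def)

lemma Omega_add: "Omega k (A + B) = Omega k A + Omega k B"
  by (simp add: Omega_eq Om4_add sm_add)
lemma Omega_diff: "Omega k (A - B) = Omega k A - Omega k B"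
  by (simp add: Omega_eq Om4_diff sm_diff)
lemma Omega_sm: "Omega k (sm a A) = sm a (Omega k A)"
  by (simp add: Omega_eq Om4_sm sm_sm mult.commute)
lemma Omega_zero[simp]: "Omega k 0 = 0"
  by (simp add: Omega_def)
lemma isr_Omega[simp]: "isr k (Omega k A)"
  by (simp add: Omega_eq)
lemma Omega_sum: "Omega k (\<Sum>x\<in>S. f x) = (\<Sum>x\<in>S. Omega k (f x))"
  unfolding Omega_def mm_sum_left mm_sum_right by (rule sum.swap)

lemma C4_cc: "C4 k = sm (4 * cc k) (Ik k)"
proof -
  have "(of_nat (k * (k + 2)) :: complex) = 4 * cc k" by (simp add: cc_def)
  then show ?thesis by (simp add: C4_eq)
qed

lemma mm_C4_right: "isr k Z \<Longrightarrow> mm k Z (C4 k) = sm (4 * cc k) Z"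
  by (simp add: C4_cc mm_sm_right mm_Ik_right)
lemma mm_C4_left: "isr k Z \<Longrightarrow> mm k (C4 k) Z = sm (4 * cc k) Z"
  by (simp add: C4_cc mm_sm_left mm_Ik_left)

definition lin :: "(cmat \<Rightarrow> cmat) \<Rightarrow> bool" where
  "lin T \<longleftrightarrow> (\<forall>A B. T (A + B) = T A + T B) \<and> (\<forall>a A. T (sm a A) = sm a (T A))"

lemma lin_diff: "lin T \<Longrightarrow> T (A - B) = T A - T B"
proof -
  assume "lin T"
  have "T (A - B) + T B = T A"
    using \<open>lin T\<close> unfolding lin_def by (metis diff_add_cancel)
  then show ?thesis by (simp add: eq_diff_eq)
qed

lemma SS_eq:
  assumes "lin T"
  shows "SS k T Z = sm (1/4) (sm 2 (mm k (T (mm k Z (Em k))) (Fm k)) + sm 2 (mm k (T (mm k Z (Fm k))) (Em k))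
            + mm k (T (mm k Z (Hm k))) (Hm k))"
proof -
  have a: "T (A + B) = T A + T B" "T (sm a A) = sm a (T A)" for A B a
    using assms by (auto simp: lin_def)
  have d: "T (A - B) = T A - T B" for A B using assms by (rule lin_diff)
  show ?thesis
    unfolding SS_def sum3 Xm0 Xm1 Xm2
    by (simp add: mm_lin a d, simp add: fun_eq_iff sm_def algebra_simps)
qed

lemma lin_id: "lin (\<lambda>Z. Z)" by (simp add: lin_def)
lemma lin_Omega: "lin (Omega k)" by (simp add: lin_def Omega_add Omega_sm)
lemma lin_Omega2: "lin (\<lambda>Z. Omega k (Omega k Z))" by (simp add: lin_def Omega_add Omega_sm)

lemmas Om_simps = Omega_eq Om4_sm Om4_add Om4_diff sm_sm mm_lin sm_add sm_diff

lemma T_comm: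
  assumes "isr k Z" and A: "A \<in> {Em k, Fm k, Hm k}"
  shows "Omega k (mm k Z A) - Omega k (mm k A Z) = mm k (Omega k Z) A - mm k A (Omega k Z)"
proof -
  have e: "Om4 k (mm k Z A) - Om4 k (mm k A Z) = mm k (Om4 k Z) A - mm k A (Om4 k Z)"
    using A comm_E[OF assms(1)] comm_F[OF assms(1)] comm_H[OF assms(1)] by auto
  have e': "\<And>i j. Om4 k (mm k Z A) i j = Om4 k (mm k A Z) i j + mm k (Om4 k Z) A i j - mm k A (Om4 k Z) i j"
    using fun_cong[OF fun_cong[OF e]] by (simp add: algebra_simps)
  show ?thesis
    by (simp add: Om_simps, simp add: fun_eq_iff sm_def e' algebra_simps)
qed

lemma T_dirac:
  assumes "isr k Z" and A: "A \<in> {Em k, Fm k, Hm k}"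
  shows "Omega k (Omega k (mm k Z A)) - sm 2 (Omega k (mm k (Omega k Z) A)) + mm k (Omega k (Omega k Z)) A
    = sm (cc k) (mm k Z A + mm k A Z) - Omega k (mm k A Z) - mm k (Omega k Z) A"
proof -
  have e: "Om4 k (Om4 k (mm k Z A)) + sm (-2) (Om4 k (mm k (Om4 k Z) A)) + mm k (Om4 k (Om4 k Z)) A
   = sm 4 (mm k (C4 k) (mm k Z A)) + sm 4 (mm k (mm k A Z) (C4 k)) + sm (-4) (Om4 k (mm k A Z)) + sm (-4) (mm k (Om4 k Z) A)"
    using A dirac_E[OF assms(1)] dirac_F[OF assms(1)] dirac_H[OF assms(1)] by auto
  have isA: "isr k A" using A by auto
  have e2: "Om4 k (Om4 k (mm k Z A)) + sm (-2) (Om4 k (mm k (Om4 k Z) A)) + mm k (Om4 k (Om4 k Z)) A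
   = sm (16 * cc k) (mm k Z A) + sm (16 * cc k) (mm k A Z) + sm (-4) (Om4 k (mm k A Z)) + sm (-4) (mm k (Om4 k Z) A)"
    using e by (simp add: mm_C4_left mm_C4_right isA assms sm_sm)
  have e': "\<And>i j. Om4 k (Om4 k (mm k Z A)) i j = 2 * Om4 k (mm k (Om4 k Z) A) i j - mm k (Om4 k (Om4 k Z)) A i j
   + 16 * cc k * mm k Z A i j + 16 * cc k * mm k A Z i j - 4 * Om4 k (mm k A Z) i j - 4 * mm k (Om4 k Z) A i j"
    using fun_cong[OF fun_cong[OF e2]] by (simp add: sm_def algebra_simps)
  show ?thesis
    by (simp add: Om_simps, simp add: fun_eq_iff sm_def e' algebra_simps)
qed

lemma T_S0:
  assumes "isr k Z" shows "SS k (\<lambda>Z. Z) Z = sm (cc k) Z"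
proof -
  have e: "sm 2 (mm k (mm k Z (Em k)) (Fm k)) + sm 2 (mm k (mm k Z (Fm k)) (Em k)) + mm k (mm k Z (Hm k)) (Hm k) = sm (4 * cc k) Z"
    using s4_0[OF assms] by (simp add: mm_C4_right assms)
  show ?thesis
    by (simp add: SS_eq[OF lin_id] e sm_sm)
qed

lemma T_S1:
  assumes "isr k Z" shows "SS k (Omega k) Z = sm (cc k - 1) (Omega k Z)"
proof -
  have e: "sm 2 (mm k (Om4 k (mm k Z (Em k))) (Fm k)) + sm 2 (mm k (Om4 k (mm k Z (Fm k))) (Em k)) + mm k (Om4 k (mm k Z (Hm k))) (Hm k)
    = sm (4 * cc k) (Om4 k Z) + sm (-4) (Om4 k Z)"
    using s4_1[OF assms] by (simp add: mm_C4_right)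
  have e': "\<And>i j. mm k (Om4 k (mm k Z (Hm k))) (Hm k) i j = - 2 * mm k (Om4 k (mm k Z (Em k))) (Fm k) i j - 2 * mm k (Om4 k (mm k Z (Fm k))) (Em k) i j
    + 4 * cc k * Om4 k Z i j - 4 * Om4 k Z i j"
    using fun_cong[OF fun_cong[OF e]] by (simp add: sm_def algebra_simps)
  show ?thesis
    by (simp add: SS_eq[OF lin_Omega] Om_simps, simp add: fun_eq_iff sm_def e' algebra_simps)
qed

lemma T_S2:
  assumes "isr k Z" shows "SS k (\<lambda>Z. Omega k (Omega k Z)) Z = sm (cc k - 3) (Omega k (Omega k Z)) + Omega k Z + sm (cc k ^ 2) Z"
proof -
  have e: "sm 2 (mm k (Om4 k (Om4 k (mm k Z (Em k)))) (Fm k)) + sm 2 (mm k (Om4 k (Om4 k (mm k Z (Fm k)))) (Em k)) + mm k (Om4 k (Om4 k (mm k Z (Hm k)))) (Hm k)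
    = sm (4 * cc k) (Om4 k (Om4 k Z)) + sm (-12) (Om4 k (Om4 k Z)) + sm 16 (Om4 k Z) + sm 4 (sm (4 * cc k) (sm (4 * cc k) Z))"
    using s4_2[OF assms] by (simp add: mm_C4_right mm_C4_left assms mm_sm_left)
  have e': "\<And>i j. mm k (Om4 k (Om4 k (mm k Z (Hm k)))) (Hm k) i j = - 2 * mm k (Om4 k (Om4 k (mm k Z (Em k)))) (Fm k) i j - 2 * mm k (Om4 k (Om4 k (mm k Z (Fm k)))) (Em k) i j
    + 4 * cc k * Om4 k (Om4 k Z) i j - 12 * Om4 k (Om4 k Z) i j + 16 * Om4 k Z i j + 64 * cc k ^ 2 * Z i j"
    using fun_cong[OF fun_cong[OF e]] by (simp add: sm_def power2_eq_square algebra_simps)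
  show ?thesis
    by (subst SS_eq[OF lin_Omega2], simp add: Om_simps, simp add: fun_eq_iff sm_def e' algebra_simps power2_eq_square, simp add: field_simps)
qed

definition pop :: "nat \<Rightarrow> complex poly \<Rightarrow> cmat \<Rightarrow> cmat" where
  "pop k p = fold_coeffs (\<lambda>a f Z. sm a Z + Omega k (f Z)) p (\<lambda>Z. 0)"

lemma pop_0[simp]: "pop k 0 Z = 0" by (simp add: pop_def)

lemma pop_pCons: "pop k (pCons a p) Z = sm a Z + Omega k (pop k p Z)"
proof (cases "p = 0 \<and> a = 0")
  case True then show ?thesis by simp
next
  case False
  then have "fold_coeffs (\<lambda>a f Z. sm a Z + Omega k (f Z)) (pCons a p) =
      (\<lambda>a f Z. sm a Z + Omega k (f Z)) a \<circ> fold_coeffs (\<lambda>a f Z. sm a Z + Omega k (f Z)) p"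
    by (cases "p = 0") auto
  then show ?thesis by (simp add: pop_def)
qed

lemma pop_const[simp]: "pop k [:a:] Z = sm a Z"
  by (simp add: pop_pCons)

lemma pop_one[simp]: "pop k 1 Z = Z"
  by (simp add: one_pCons pop_pCons)

lemma pop_lin1: "pop k [:b, 1:] Z = Omega k Z + sm b Z"
  by (simp add: pop_pCons)

lemma pop_Zadd: "pop k p (A + B) = pop k p A + pop k p B"
  by (induction p) (simp_all add: pop_pCons sm_add Omega_add algebra_simps)

lemma pop_Zsm: "pop k p (sm c A) = sm c (pop k p A)"
  by (induction p) (simp_all add: pop_pCons sm_add sm_sm Omega_sm mult.commute)

lemma pop_Zzero[simp]: "pop k p 0 = 0"
  by (induction p) (simp_all add: pop_pCons)

lemma pop_Zdiff: "pop k p (A - B) = pop k p A - pop k p B"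
proof -
  have "pop k p A = pop k p (A - B) + pop k p B" using pop_Zadd[of k p "A - B" B] by simp
  then show ?thesis by (simp add: eq_diff_eq)
qed

lemma pop_Zsum: "pop k p (\<Sum>x\<in>S. f x) = (\<Sum>x\<in>S. pop k p (f x))"
proof (cases "finite S")
  case True then show ?thesis
    by (induction S rule: finite_induct) (simp_all add: pop_Zadd)
qed simp

lemma isr_pop[simp]: "isr k Z \<Longrightarrow> isr k (pop k p Z)"
  by (induction p) (simp_all add: pop_pCons)

lemma pop_add: "pop k (p + q) Z = pop k p Z + pop k q Z"
proof (induction p arbitrary: q)
  case 0 then show ?case by simp
next
  case (pCons a p)
  show ?case
  proof (cases q)
    case (pCons b q')
    have "pop k (p + q') Z = pop k p Z + pop k q' Z" by (rule pCons.IH)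
    then show ?thesis using pCons
      by (simp add: pop_pCons sm_add_left Omega_add add_ac)
  qed
qed

lemma pop_smult: "pop k (smult a p) Z = sm a (pop k p Z)"
  by (induction p) (simp_all add: pop_pCons sm_add sm_sm Omega_sm)

lemma pop_minus: "pop k (- p) Z = - pop k p Z"
  using pop_smult[of k "-1" p Z] by simp

lemma pop_diff: "pop k (p - q) Z = pop k p Z - pop k q Z"
  using pop_add[of k p "- q" Z] by (simp add: pop_minus)

lemma pop_sum: "pop k (\<Sum>x\<in>S. f x) Z = (\<Sum>x\<in>S. pop k (f x) Z)"
proof (cases "finite S")
  case True then show ?thesis
    by (induction S rule: finite_induct) (simp_all add: pop_add)
qed simp

lemma pop_mult: "pop k (p * q) Z = pop k p (pop k q Z)"
proof (induction p)
  case 0 then show ?case by simp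
next
  case (pCons a p)
  have "pCons a p * q = smult a q + pCons 0 (p * q)" by (simp add: mult_pCons_left)
  then show ?case using pCons.IH by (simp add: pop_add pop_smult pop_pCons)
qed

lemma pop_eigen: "Omega k Z = sm l Z \<Longrightarrow> pop k p Z = sm (poly p l) Z"
  by (induction p) (simp_all add: pop_pCons Omega_sm sm_sm sm_add_left algebra_simps)

lemma pop_monom: "pop k (monom 1 m) Z = (Omega k ^^ m) Z"
  by (induction m) (simp_all add: monom_Suc pop_pCons)

lemma pop_dvd_zero:
  assumes "P dvd g" "pop k P Z = 0" shows "pop k g Z = 0"
proof -
  obtain r where "g = P * r" using assms(1) by auto
  then have "g = r * P" by (simp add: mult.commute)
  then show ?thesis using assms(2) by (simp add: pop_mult)
qed

lemma prod_roots_dvd: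
  fixes f :: "nat \<Rightarrow> complex"
  assumes "finite L" "inj_on f L" "\<forall>l\<in>L. poly g (f l) = 0"
  shows "(\<Prod>l\<in>L. [:- f l, 1:]) dvd g"
  using assms
proof (induction L arbitrary: g rule: finite_induct)
  case empty then show ?case by simp
next
  case (insert x L)
  have "(\<Prod>l\<in>L. [:- f l, 1:]) dvd g" using insert by (auto simp: inj_on_insert)
  then obtain h where h: "g = (\<Prod>l\<in>L. [:- f l, 1:]) * h" by auto
  have ne: "poly (\<Prod>l\<in>L. [:- f l, 1:]) (f x) \<noteq> 0"
    using insert.prems(1) insert.hyps by (auto simp: poly_prod inj_on_insert)
  have "poly g (f x) = 0" using insert.prems by auto
  then have "poly h (f x) = 0" using ne h by simp
  then have "[:- f x, 1:] dvd h" by (simp add: poly_eq_0_iff_dvd)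
  then have "[:- f x, 1:] * (\<Prod>l\<in>L. [:- f l, 1:]) dvd (\<Prod>l\<in>L. [:- f l, 1:]) * h"
    by (metis mult.commute mult_dvd_mono dvd_refl)
  then show ?case using insert.hyps h by simp
qed

definition lag :: "(nat \<Rightarrow> complex) \<Rightarrow> nat set \<Rightarrow> nat \<Rightarrow> complex poly" where
  "lag f L l = smult (1 / (\<Prod>l'\<in>L-{l}. (f l - f l'))) (\<Prod>l'\<in>L-{l}. [:- f l', 1:])"

lemma poly_lag:
  assumes "finite L" "inj_on f L" "l \<in> L" "l' \<in> L"
  shows "poly (lag f L l) (f l') = (if l' = l then 1 else 0)"
proof (cases "l' = l")
  case True
  have "(\<Prod>l''\<in>L-{l}. (f l - f l'')) \<noteq> 0"
    using assms by (auto simp: inj_on_def)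
  then show ?thesis using True by (simp add: lag_def poly_prod)
next
  case False
  then have "l' \<in> L - {l}" using assms by auto
  then have "(\<Prod>l''\<in>L-{l}. poly [:- f l'', 1:] (f l')) = 0"
    using assms by (intro prod_zero) auto
  then show ?thesis using False by (simp add: lag_def poly_prod)
qed

lemma spec_decomp:
  assumes "finite L" "inj_on f L" "pop k (\<Prod>l\<in>L. [:- f l, 1:]) Z = 0"
  shows "pop k g Z = (\<Sum>l\<in>L. sm (poly g (f l)) (pop k (lag f L l) Z))"
proof -
  let ?h = "g - (\<Sum>l\<in>L. smult (poly g (f l)) (lag f L l))"
  have "\<forall>l'\<in>L. poly ?h (f l') = 0"
  proof
    fix l' assume l': "l' \<in> L"
    have "(\<Sum>l\<in>L. poly g (f l) * poly (lag f L l) (f l')) = (\<Sum>l\<in>L. if l = l' then poly g (f l') else 0)"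
      by (rule sum.cong) (use assms l' in \<open>auto simp: poly_lag\<close>)
    also have "\<dots> = poly g (f l')" using l' assms(1) by (simp add: sum.delta')
    finally show "poly ?h (f l') = 0" by (simp add: poly_sum)
  qed
  then have "(\<Prod>l\<in>L. [:- f l, 1:]) dvd ?h" using assms by (intro prod_roots_dvd) auto
  then have "pop k ?h Z = 0" using assms(3) by (rule pop_dvd_zero)
  then show ?thesis by (simp add: pop_diff pop_sum pop_smult)
qed

lemma spec_eigen:
  assumes "finite L" "inj_on f L" "pop k (\<Prod>l\<in>L. [:- f l, 1:]) Z = 0" "l \<in> L"
  shows "Omega k (pop k (lag f L l) Z) = sm (f l) (pop k (lag f L l) Z)"
proof -
  have "(\<Prod>l\<in>L. [:- f l, 1:]) = [:- f l, 1:] * (\<Prod>l'\<in>L-{l}. [:- f l', 1:])"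
    using assms by (simp add: prod.remove)
  then have "[:- f l, 1:] * lag f L l = smult (1 / (\<Prod>l'\<in>L-{l}. (f l - f l'))) (\<Prod>l\<in>L. [:- f l, 1:])"
    by (simp add: lag_def mult_smult_right)
  then have "pop k ([:- f l, 1:] * lag f L l) Z = 0"
    using assms(3) by (simp add: pop_smult)
  moreover have "pop k ([:- f l, 1:] * lag f L l) Z = Omega k (pop k (lag f L l) Z) + sm (- f l) (pop k (lag f L l) Z)"
    by (simp only: pop_mult pop_lin1)
  ultimately have "Omega k (pop k (lag f L l) Z) + sm (- f l) (pop k (lag f L l) Z) = 0"
    by simp
  then show ?thesis by (simp add: fun_eq_iff sm_def add_eq_0_iff)
qed

definition lam :: "nat \<Rightarrow> nat \<Rightarrow> complex" where
  "lam k l = cc k - of_nat (l * (l + 1)) / 2"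

lemma lam_inj: "inj_on (lam k) L"
proof (rule inj_onI)
  fix l l' assume "lam k l = lam k l'"
  then have e: "l * (l + 1) = l' * (l' + 1)"
    by (simp add: lam_def del: of_nat_mult of_nat_add)
  show "l = l'"
  proof (rule ccontr)
    assume "l \<noteq> l'"
    then consider "l < l'" | "l' < l" by linarith
    then show False
    proof cases
      case 1 then have "l * (l + 1) < l' * (l' + 1)" by (intro mult_strict_mono) auto
      with e show False by simp
    next
      case 2 then have "l' * (l' + 1) < l * (l + 1)" by (intro mult_strict_mono) auto
      with e show False by simp
    qed
  qed
qed

lemma lam_Suc: "lam k (Suc l) = lam k l - (of_nat l + 1)"
  by (simp add: lam_def field_simps)

lemma lam_pred: "l \<ge> 1 \<Longrightarrow> lam k (l - 1) = lam k l + of_nat l"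
proof -
  assume "l \<ge> 1"
  then obtain m where m: "l = Suc m" by (cases l) auto
  show ?thesis unfolding m using lam_Suc[of k m] by simp
qed

definition Pn :: "nat \<Rightarrow> nat \<Rightarrow> complex poly" where
  "Pn k j = (\<Prod>l\<in>{..j}. [:- lam k l, 1:])"

definition Kset :: "nat \<Rightarrow> nat set" where "Kset l = {l - 1, l, l + 1}"

definition Kp :: "nat \<Rightarrow> nat \<Rightarrow> complex poly" where
  "Kp k l = (\<Prod>l'\<in>Kset l. [:- lam k l', 1:])"

lemma Omega_sm_eigen: "Omega k Z = sm m Z \<Longrightarrow> Omega k (Omega k Z) = sm (m * m) Z"
  by (simp add: Omega_sm sm_sm)

lemma D_lemma:
  assumes Z: "isr k Z" and eig: "Omega k Z = sm (lam k l) Z" and A: "A \<in> {Em k, Fm k, Hm k}"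
  shows "pop k (Kp k l) (mm k Z A) = 0"
proof -
  define la where "la = lam k l"
  define c where "c = cc k"
  define v where "v = mm k Z A"
  define w where "w = mm k A Z"
  have isA: "isr k A" using A by auto
  have E1m: "Omega k v - Omega k w = sm la v - sm la w"
    using T_comm[OF Z A] eig by (simp add: v_def w_def la_def mm_sm_left mm_sm_right)
  have E2m: "Omega k (Omega k v) - sm 2 (sm la (Omega k v)) + sm (la * la) v
      = sm c (v + w) - Omega k w - sm la v"
    using T_dirac[OF Z A] eig by (simp add: v_def w_def la_def c_def mm_sm_left Omega_sm sm_sm)
  have E3m: "Omega k (Omega k v) - Omega k (Omega k w) = sm la (Omega k v) - sm la (Omega k w)"
    using arg_cong[OF E1m, of "Omega k"] by (simp add: Omega_diff Omega_sm)
  have E4m: "Omega k (Omega k (Omega k v)) - sm 2 (sm la (Omega k (Omega k v))) + sm (la * la) (Omega k v)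
      = sm c (Omega k v + Omega k w) - Omega k (Omega k w) - sm la (Omega k v)"
    using arg_cong[OF E2m, of "Omega k"] by (simp add: Omega_diff Omega_add Omega_sm)
  have E1: "\<And>i j. Omega k v i j - Omega k w i j = la * v i j - la * w i j"
    using fun_cong[OF fun_cong[OF E1m]] by (simp add: sm_def)
  have E2: "\<And>i j. Omega k (Omega k v) i j - 2 * (la * Omega k v i j) + la * la * v i j
      = c * (v i j + w i j) - Omega k w i j - la * v i j"
    using fun_cong[OF fun_cong[OF E2m]] by (simp add: sm_def)
  have E3: "\<And>i j. Omega k (Omega k v) i j - Omega k (Omega k w) i j = la * Omega k v i j - la * Omega k w i j"
    using fun_cong[OF fun_cong[OF E3m]] by (simp add: sm_def)
  have E4: "\<And>i j. Omega k (Omega k (Omega k v)) i j - 2 * (la * Omega k (Omega k v) i j) + la * la * Omega k v i j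
      = c * (Omega k v i j + Omega k w i j) - Omega k (Omega k w) i j - la * Omega k v i j"
    using fun_cong[OF fun_cong[OF E4m]] by (simp add: sm_def)
  have lal: "2 * (c - la) = of_nat l * (of_nat l + 1)"
    by (simp add: la_def c_def lam_def field_simps)
  show ?thesis
  proof (cases "l = 0")
    case True
    have ks: "Kset l = {0, 1}" using True by (auto simp: Kset_def)
    have "Kp k l = [:- lam k 0, 1:] * [:- lam k 1, 1:]"
      by (simp add: Kp_def ks)
    then have "pop k (Kp k l) v = pop k [:- lam k 0, 1:] (pop k [:- lam k 1, 1:] v)"
      by (simp only: pop_mult)
    moreover have "lam k 0 = c" "lam k 1 = c - 1" by (simp_all add: lam_def c_def)
    moreover have "la = c" using True by (simp add: la_def lam_def c_def)
    ultimately have "pop k (Kp k l) v = Omega k (Omega k v) + sm (1 - 2 * c) (Omega k v) + sm (c * c - c) v"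
      by (simp only: pop_lin1, simp add: Omega_add Omega_sm sm_sm,
          simp add: fun_eq_iff sm_def algebra_simps)
    also have "\<dots> = 0"
    proof (intro ext)
      fix i j
      show "(Omega k (Omega k v) + sm (1 - 2 * c) (Omega k v) + sm (c * c - c) v) i j = 0 i j"
        using E1[of i j] E2[of i j] \<open>la = c\<close> by (simp add: sm_def) algebra
    qed
    finally show ?thesis by (simp add: v_def)
  next
    case False
    have ks: "Kset l = insert (l - 1) (insert l {l + 1})" by (auto simp: Kset_def)
    have n1: "l - 1 \<notin> insert l {l + 1}" using False by auto
    have "Kp k l = [:- lam k (l - 1), 1:] * (\<Prod>l'\<in>insert l {l + 1}. [:- lam k l', 1:])"
      unfolding Kp_def ks by (rule prod.insert) (use n1 in auto)
    also have "(\<Prod>l'\<in>insert l {l + 1}. [:- lam k l', 1:]) = [:- lam k l, 1:] * [:- lam k (l + 1), 1:]"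
      by (subst prod.insert) auto
    finally have "Kp k l = [:- lam k (l - 1), 1:] * ([:- lam k l, 1:] * [:- lam k (l + 1), 1:])" .
    then have "pop k (Kp k l) v = pop k [:- lam k (l - 1), 1:] (pop k [:- lam k l, 1:] (pop k [:- lam k (l + 1), 1:] v))"
      by (simp only: pop_mult)
    moreover have "lam k (l - 1) = la + of_nat l" using False lam_pred[of l k] by (simp add: la_def)
    moreover have "lam k (l + 1) = la - of_nat l - 1" using lam_Suc[of k l] by (simp add: la_def)
    ultimately have "pop k (Kp k l) v = Omega k (Omega k (Omega k v))
        + sm (- (la + of_nat l) - la - (la - of_nat l - 1)) (Omega k (Omega k v))
        + sm ((la + of_nat l) * la + la * (la - of_nat l - 1) + (la + of_nat l) * (la - of_nat l - 1)) (Omega k v)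
        + sm (- ((la + of_nat l) * la * (la - of_nat l - 1))) v"
      by (simp only: pop_lin1, simp add: Omega_add Omega_sm sm_sm la_def[symmetric],
          simp add: fun_eq_iff sm_def algebra_simps)
    also have "\<dots> = 0"
    proof (intro ext)
      fix i j
      show "(Omega k (Omega k (Omega k v))
        + sm (- (la + of_nat l) - la - (la - of_nat l - 1)) (Omega k (Omega k v))
        + sm ((la + of_nat l) * la + la * (la - of_nat l - 1) + (la + of_nat l) * (la - of_nat l - 1)) (Omega k v)
        + sm (- ((la + of_nat l) * la * (la - of_nat l - 1))) v) i j = 0 i j"
        using E1[of i j] E2[of i j] E3[of i j] E4[of i j] lal by (simp add: sm_def) algebra
    qed
    finally show ?thesis by (simp add: v_def)
  qed
qed

lemma mm_Xm0: "mm k Z (Xm k 0) = sm (1/2) (mm k Z (Em k) + mm k Z (Fm k))"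
  unfolding Xm0 by (simp only: mm_lin)
lemma mm_Xm1: "mm k Z (Xm k 1) = sm (\<i>/2) (mm k Z (Fm k) - mm k Z (Em k))"
  unfolding Xm1 by (simp only: mm_lin)
lemma mm_Xm2: "mm k Z (Xm k 2) = sm (1/2) (mm k Z (Hm k))"
  unfolding Xm2 by (simp only: mm_lin)

lemma kill_Xm:
  assumes h: "\<And>A. A \<in> {Em k, Fm k, Hm k} \<Longrightarrow> pop k P (mm k Z A) = 0" and a: "a \<in> {0,1,2}"
  shows "pop k P (mm k Z (Xm k a)) = 0"
proof -
  have e: "pop k P (mm k Z (Em k)) = 0" "pop k P (mm k Z (Fm k)) = 0" "pop k P (mm k Z (Hm k)) = 0"
    using h by auto
  from a consider "a = 0" | "a = 1" | "a = 2" by blast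
  then show ?thesis
  proof cases
    case 1 then show ?thesis by (simp only: mm_Xm0 pop_Zsm pop_Zadd e) simp
  next
    case 2 then show ?thesis by (simp only: mm_Xm1 pop_Zsm pop_Zdiff e) simp
  next
    case 3 then show ?thesis by (simp only: mm_Xm2 pop_Zsm e) simp
  qed
qed

lemma D_X:
  assumes "isr k Z" "Omega k Z = sm (lam k l) Z" "a \<in> {0,1,2}"
  shows "pop k (Kp k l) (mm k Z (Xm k a)) = 0"
  by (rule kill_Xm) (use D_lemma[OF assms(1,2)] assms(3) in auto)

lemma Kp_dvd:
  assumes "Kset l \<subseteq> L" "finite L"
  shows "Kp k l dvd (\<Prod>l'\<in>L. [:- lam k l', 1:])"
  unfolding Kp_def using assms by (rule prod_dvd_prod_subset[rotated])

lemma fstep: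
  assumes Z: "isr k Z" and P: "pop k (Pn k j) Z = 0" and a: "a \<in> {0,1,2}"
  shows "pop k (Pn k (Suc j)) (mm k Z (Xm k a)) = 0"
proof -
  let ?Z = "\<lambda>l. pop k (lag (lam k) {..j} l) Z"
  have dec: "Z = (\<Sum>l\<in>{..j}. ?Z l)"
    using spec_decomp[of "{..j}" "lam k" k Z 1] P lam_inj by (simp add: Pn_def)
  have "pop k (Pn k (Suc j)) (mm k (?Z l) (Xm k a)) = 0" if l: "l \<le> j" for l
  proof -
    have eig: "Omega k (?Z l) = sm (lam k l) (?Z l)"
      using spec_eigen[of "{..j}" "lam k" k Z l] P lam_inj l by (simp add: Pn_def)
    have dv: "Kp k l dvd Pn k (Suc j)"
      unfolding Pn_def by (rule Kp_dvd) (use l in \<open>auto simp: Kset_def\<close>)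
    have isz: "isr k (?Z l)" using Z by simp
    have kill: "pop k (Kp k l) (mm k (?Z l) (Xm k a)) = 0" by (rule D_X[OF isz eig a])
    show ?thesis by (rule pop_dvd_zero[OF dv kill])
  qed
  then have "(\<Sum>l\<in>{..j}. pop k (Pn k (Suc j)) (mm k (?Z l) (Xm k a))) = 0" by simp
  then show ?thesis
    by (subst dec) (simp add: mm_sum_left pop_Zsum)
qed

lemma SS_zero: "(\<And>a. a \<in> {0,1,2} \<Longrightarrow> T (mm k Z (Xm k a)) = 0) \<Longrightarrow> SS k T Z = 0"
  by (simp add: SS_def)

lemma vanish:
  assumes "\<And>Z. isr k Z \<Longrightarrow> pop k (Pn k j) Z = 0 \<Longrightarrow> T Z = 0"
    and "isr k X" and "pop k (Pn k 0) X = 0"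
  shows "(SS k ^^ j) T X = 0"
  using assms
proof (induction j arbitrary: T)
  case 0 then show ?case by simp
next
  case (Suc j)
  have "(SS k ^^ j) (SS k T) X = 0"
  proof (rule Suc.IH)
    fix Z assume "isr k Z" "pop k (Pn k j) Z = 0"
    then show "SS k T Z = 0"
      by (intro SS_zero Suc.prems(1)) (auto intro: fstep)
  qed (use Suc.prems in auto)
  then show ?case by (simp add: funpow_Suc_right del: funpow.simps)
qed

lemma SS_Tdiff: "SS k (\<lambda>Z. T1 Z - T2 Z) Z = SS k T1 Z - SS k T2 Z"
  by (simp add: SS_def mm_diff_left sum_subtractf)
lemma SS_Tadd: "SS k (\<lambda>Z. T1 Z + T2 Z) Z = SS k T1 Z + SS k T2 Z"
  by (simp add: SS_def mm_add_left sum.distrib)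
lemma SS_Tsm: "SS k (\<lambda>Z. sm a (T Z)) Z = sm a (SS k T Z)"
  unfolding SS_def by (simp only: mm_sm_left sm_sum)

lemma SSn_Tdiff: "(SS k ^^ n) (\<lambda>Z. T1 Z - T2 Z) X = (SS k ^^ n) T1 X - (SS k ^^ n) T2 X"
proof (induction n arbitrary: T1 T2 X)
  case 0 then show ?case by simp
next
  case (Suc n)
  have "SS k (\<lambda>Z. T1 Z - T2 Z) = (\<lambda>Z. SS k T1 Z - SS k T2 Z)" by (simp add: fun_eq_iff SS_Tdiff)
  then show ?case using Suc.IH by (simp add: funpow_Suc_right del: funpow.simps)
qed

lemma SSn_Tsm: "(SS k ^^ n) (\<lambda>Z. sm a (T Z)) X = sm a ((SS k ^^ n) T X)"
proof (induction n arbitrary: T X)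
  case 0 then show ?case by simp
next
  case (Suc n)
  have "SS k (\<lambda>Z. sm a (T Z)) = (\<lambda>Z. sm a (SS k T Z))" by (simp add: fun_eq_iff SS_Tsm)
  then show ?case using Suc.IH by (simp add: funpow_Suc_right del: funpow.simps)
qed

lemma SSn_cong:
  assumes "\<And>Z. isr k Z \<Longrightarrow> T1 Z = T2 Z" "isr k X"
  shows "(SS k ^^ n) T1 X = (SS k ^^ n) T2 X"
  using assms
proof (induction n arbitrary: T1 T2)
  case 0 then show ?case by simp
next
  case (Suc n)
  have "(SS k ^^ n) (SS k T1) X = (SS k ^^ n) (SS k T2) X"
    by (rule Suc.IH) (use Suc.prems in \<open>auto simp: SS_def\<close>)
  then show ?case by (simp add: funpow_Suc_right del: funpow.simps)
qed

definition pin :: "nat \<Rightarrow> nat \<Rightarrow> complex poly" where "pin k n = lag (lam k) {..n} n"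
definition gam :: "nat \<Rightarrow> nat \<Rightarrow> complex" where
  "gam k n = (of_nat n + 1) / (2 * of_nat n + 1) * (cc k - of_nat (n * (n + 2)) / 4)"

lemma gam_alg:
  fixes c N L :: complex
  assumes "2*N+1 \<noteq> 0" "N+1 \<noteq> 0" "L = c - N*(N+1)/2"
  shows "((c - 3) * (L*L) + L + c*c - (L + N + L) * ((c-1)*L) + (L + N)*L*c) / ((2*N+1)*(N+1))
       = (N+1)/(2*N+1) * (c - N*(N+2)/4)"
proof -
  have "((c - 3) * (L*L) + L + c*c - (L + N + L) * ((c-1)*L) + (L + N)*L*c) = (N+1)*(N+1) * (c - N*(N+2)/4)"
    unfolding assms(3) by (simp add: field_simps)
  then have "((c - 3) * (L*L) + L + c*c - (L + N + L) * ((c-1)*L) + (L + N)*L*c) / ((2*N+1)*(N+1))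
      = ((N+1)*(N+1) * (c - N*(N+2)/4)) / ((2*N+1)*(N+1))" by (rule arg_cong)
  also have "\<dots> = ((N+1) * ((N+1) * (c - N*(N+2)/4))) / ((N+1) * (2*N+1))"
    by (simp add: mult.assoc mult.commute)
  also have "\<dots> = ((N+1) * (c - N*(N+2)/4)) / (2*N+1)"
    using assms(2) by (rule nonzero_mult_divide_mult_cancel_left)
  also have "\<dots> = (N+1)/(2*N+1) * (c - N*(N+2)/4)" by simp
  finally show ?thesis .
qed

lemma SS_Zsum_pop: "SS k (pop k p) (\<Sum>x\<in>S. f x) = (\<Sum>x\<in>S. SS k (pop k p) (f x))"
  unfolding SS_def by (simp only: mm_sum_left pop_Zsum) (rule sum.swap)

lemma SS_lin3: "SS k (\<lambda>Z. sm d1 (T1 Z) + sm d2 (T2 Z) + sm d3 (T3 Z)) R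
   = sm d1 (SS k T1 R) + sm d2 (SS k T2 R) + sm d3 (SS k T3 R)"
  unfolding SS_def by (simp only: mm_add_left mm_sm_left sum.distrib sm_sum)

lemma SS_cong1: "(\<And>a. a \<in> {0,1,2} \<Longrightarrow> T1 (mm k Z (Xm k a)) = T2 (mm k Z (Xm k a))) \<Longrightarrow> SS k T1 Z = SS k T2 Z"
  unfolding SS_def by (rule sum.cong) auto

lemma poly_pin: "l \<le> n \<Longrightarrow> poly (pin k n) (lam k l) = (if l = n then 1 else 0)"
  unfolding pin_def by (rule poly_lag) (auto simp: lam_inj)

lemma pin_dvd:
  assumes "Kset l \<subseteq> {..<n}"
  shows "Kp k l dvd pin k n"
proof -
  have "{..n} - {n} = {..<n}" by auto
  then have "pin k n = smult (1 / (\<Prod>l'\<in>{..<n}. (lam k n - lam k l'))) (\<Prod>l'\<in>{..<n}. [:- lam k l', 1:])"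
    by (simp add: pin_def lag_def)
  moreover have "Kp k l dvd (\<Prod>l'\<in>{..<n}. [:- lam k l', 1:])"
    by (rule Kp_dvd) (use assms in auto)
  ultimately show ?thesis by (simp add: dvd_smult)
qed

lemma Pn_dvd_pin: "j < n \<Longrightarrow> Pn k j dvd pin k n"
proof -
  assume "j < n"
  have "{..n} - {n} = {..<n}" by auto
  then have "pin k n = smult (1 / (\<Prod>l'\<in>{..<n}. (lam k n - lam k l'))) (\<Prod>l'\<in>{..<n}. [:- lam k l', 1:])"
    by (simp add: pin_def lag_def)
  moreover have "Pn k j dvd (\<Prod>l'\<in>{..<n}. [:- lam k l', 1:])"
    unfolding Pn_def by (rule prod_dvd_prod_subset) (use \<open>j < n\<close> in auto)
  ultimately show ?thesis by (simp add: dvd_smult)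
qed

lemma pin_0: "pin k 0 = 1"
  by (simp add: pin_def lag_def)

definition rhoP :: "nat \<Rightarrow> nat \<Rightarrow> complex poly" where "rhoP k n = lag (lam k) (Kset n) (Suc n)"

lemma Kp_dvd_diff: "Kp k n dvd (pin k (Suc n) - rhoP k n)"
proof -
  have fin: "finite (Kset n)" by (simp add: Kset_def)
  show ?thesis unfolding Kp_def
  proof (rule prod_roots_dvd[OF fin lam_inj], intro ballI)
    fix l assume l: "l \<in> Kset n"
    then have "l \<le> Suc n" by (auto simp: Kset_def)
    then have a: "poly (pin k (Suc n)) (lam k l) = (if l = Suc n then 1 else 0)" by (rule poly_pin)
    have b: "poly (rhoP k n) (lam k l) = (if l = Suc n then 1 else 0)"
      unfolding rhoP_def by (rule poly_lag[OF fin lam_inj]) (use l in \<open>auto simp: Kset_def\<close>)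
    show "poly (pin k (Suc n) - rhoP k n) (lam k l) = 0" by (simp add: a b)
  qed
qed

lemma SS_rho:
  assumes R: "isr k R" and eig: "Omega k R = sm (lam k n) R"
  shows "SS k (pop k (rhoP k n)) R = sm (gam k n) R"
proof -
  define la where "la = lam k n"
  define c where "c = cc k"
  have S0: "SS k (\<lambda>Z. Z) R = sm c R" using T_S0[OF R] by (simp add: c_def)
  have S1: "SS k (Omega k) R = sm ((c - 1) * la) R" using T_S1[OF R] eig by (simp add: c_def la_def sm_sm)
  have S2: "SS k (\<lambda>Z. Omega k (Omega k Z)) R = sm ((c - 3) * (la * la) + la + c * c) R"
    using T_S2[OF R] eig by (simp add: c_def la_def sm_sm Omega_sm power2_eq_square sm_add_left)
  have la1: "lam k (Suc n) = la - of_nat n - 1" using lam_Suc[of k n] by (simp add: la_def)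
  show ?thesis
  proof (cases "n = 0")
    case True
    have ks: "Kset 0 - {Suc 0} = {0}" by (auto simp: Kset_def)
    have rp: "rhoP k n = smult (1 / (lam k 1 - lam k 0)) [:- lam k 0, 1:]"
      unfolding rhoP_def lag_def True ks by simp
    have l0: "lam k 0 = c" "lam k 1 = c - 1" "lam k (Suc 0) = c - 1" by (simp_all add: lam_def c_def)
    have "pop k (rhoP k n) = (\<lambda>Z. sm (-1) (Omega k Z) + sm c Z + sm 0 Z)"
      by (rule ext) (simp only: rp pop_smult pop_lin1, simp add: l0 sm_add sm_sm, (simp add: sm_def fun_eq_iff)?)
    then have "SS k (pop k (rhoP k n)) R = sm (-1) (SS k (Omega k) R) + sm c (SS k (\<lambda>Z. Z) R) + sm 0 (SS k (\<lambda>Z. Z) R)"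
      using SS_lin3[of k "-1" "Omega k" c "\<lambda>Z. Z" 0 "\<lambda>Z. Z" R] by simp
    also have "\<dots> = sm (gam k n) R"
      using True by (simp add: S0 S1 sm_sm l0 la_def gam_def c_def, simp add: sm_def fun_eq_iff algebra_simps)
    finally show ?thesis .
  next
    case False
    have ks: "Kset n - {Suc n} = insert (n - 1) {n}" using False by (auto simp: Kset_def)
    have n1: "n - 1 \<notin> {n}" using False by auto
    have lm: "lam k (n - 1) = la + of_nat n" "lam k (n - Suc 0) = la + of_nat n"
      using False lam_pred[of n k] by (simp_all add: la_def)
    define D where "D = (lam k (Suc n) - lam k (n - 1)) * (lam k (Suc n) - lam k n)"
    have D: "D = (2 * of_nat n + 1) * (of_nat n + 1)"
      by (simp add: D_def la1 lm la_def[symmetric] algebra_simps)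
    have Dnat: "D = of_nat ((2 * n + 1) * (n + 1))" unfolding D by (simp add: algebra_simps)
    have Dnz: "D \<noteq> 0" unfolding Dnat of_nat_eq_0_iff by simp
    have p1: "(\<Prod>l'\<in>insert (n - 1) {n}. [:- lam k l', 1:]) = [:- lam k (n - 1), 1:] * [:- lam k n, 1:]"
      by (subst prod.insert) (use n1 in auto)
    have p2: "(\<Prod>l'\<in>insert (n - 1) {n}. (lam k (Suc n) - lam k l')) = (lam k (Suc n) - lam k (n - 1)) * (lam k (Suc n) - lam k n)"
      by (subst prod.insert) (use n1 in auto)
    have rp: "rhoP k n = smult (1 / D) ([:- lam k (n - 1), 1:] * [:- lam k n, 1:])"
      unfolding rhoP_def lag_def ks p1 p2 D_def by (rule refl)
    have "pop k (rhoP k n) = (\<lambda>Z. sm (1 / D) (Omega k (Omega k Z)) + sm (- (lam k (n - 1) + la) / D) (Omega k Z)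
        + sm (lam k (n - 1) * la / D) Z)"
      by (rule ext) (simp only: rp pop_smult pop_mult pop_lin1, simp add: Omega_add Omega_sm la_def,
          simp add: fun_eq_iff sm_def algebra_simps add_divide_distrib diff_divide_distrib)
    then have "SS k (pop k (rhoP k n)) R = sm (1 / D) (SS k (\<lambda>Z. Omega k (Omega k Z)) R)
        + sm (- (lam k (n - 1) + la) / D) (SS k (Omega k) R) + sm (lam k (n - 1) * la / D) (SS k (\<lambda>Z. Z) R)"
      using SS_lin3[of k "1 / D" "\<lambda>Z. Omega k (Omega k Z)" "- (lam k (n - 1) + la) / D" "Omega k"
          "lam k (n - 1) * la / D" "\<lambda>Z. Z" R] by simp
    also have "\<dots> = sm (((c - 3) * (la * la) + la + c * c - (lam k (n - 1) + la) * ((c - 1) * la)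
        + lam k (n - 1) * la * c) / D) R"
      by (simp add: S0 S1 S2 sm_sm, simp add: sm_def fun_eq_iff field_simps Dnz)
    also have "((c - 3) * (la * la) + la + c * c - (lam k (n - 1) + la) * ((c - 1) * la)
        + lam k (n - 1) * la * c) / D = gam k n"
    proof -
      have lav: "la = c - of_nat n * (of_nat n + 1) / 2" by (simp add: la_def lam_def c_def algebra_simps)
      have n1: "2 * (of_nat n :: complex) + 1 \<noteq> 0"
      proof -
        have "2 * (of_nat n :: complex) + 1 = of_nat (2 * n + 1)" by simp
        then show ?thesis by (simp only: of_nat_eq_0_iff) (simp?)
      qed
      have n2: "(of_nat n :: complex) + 1 \<noteq> 0"
      proof -
        have "(of_nat n :: complex) + 1 = of_nat (n + 1)" by simp
        then show ?thesis by (simp only: of_nat_eq_0_iff) (simp?)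
      qed
      have g: "gam k n = (of_nat n + 1) / (2 * of_nat n + 1) * (c - of_nat n * (of_nat n + 2) / 4)"
        unfolding gam_def c_def by (simp only: of_nat_mult of_nat_add of_nat_numeral)
      show ?thesis unfolding D lm g using gam_alg[OF n1 n2 lav] by simp
    qed
    finally show ?thesis .
  qed
qed

lemma G_lemma:
  assumes R: "isr k R" and P: "pop k (Pn k n) R = 0"
  shows "SS k (pop k (pin k (Suc n))) R = sm (gam k n) (pop k (pin k n) R)"
proof -
  let ?R = "\<lambda>l. pop k (lag (lam k) {..n} l) R"
  have P': "pop k (\<Prod>l\<in>{..n}. [:- lam k l, 1:]) R = 0" using P by (simp add: Pn_def)
  have dec: "R = (\<Sum>l\<in>{..n}. ?R l)"
    using spec_decomp[OF _ lam_inj P', of 1] by simp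
  have eig: "Omega k (?R l) = sm (lam k l) (?R l)" if "l \<le> n" for l
    using spec_eigen[OF _ lam_inj P', of l] that by simp
  have isR: "isr k (?R l)" for l using R by simp
  have pinR: "pop k (pin k n) R = ?R n"
  proof -
    have "pop k (pin k n) R = (\<Sum>l\<in>{..n}. sm (poly (pin k n) (lam k l)) (?R l))"
      using spec_decomp[OF _ lam_inj P', of "pin k n"] by simp
    also have "\<dots> = (\<Sum>l\<in>{..n}. if l = n then ?R l else 0)"
      by (rule sum.cong) (auto simp: poly_pin)
    also have "\<dots> = ?R n" by (simp add: sum.delta')
    finally show ?thesis .
  qed
  have zero: "SS k (pop k (pin k (Suc n))) (?R l) = 0" if l: "l < n" for l
  proof (rule SS_zero)
    fix a :: nat assume a: "a \<in> {0,1,2}"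
    have dv: "Kp k l dvd pin k (Suc n)" by (rule pin_dvd) (use l in \<open>auto simp: Kset_def\<close>)
    have kill: "pop k (Kp k l) (mm k (?R l) (Xm k a)) = 0"
      by (rule D_X[OF isR eig a]) (use l in auto)
    show "pop k (pin k (Suc n)) (mm k (?R l) (Xm k a)) = 0" by (rule pop_dvd_zero[OF dv kill])
  qed
  have top: "SS k (pop k (pin k (Suc n))) (?R n) = sm (gam k n) (?R n)"
  proof -
    have "SS k (pop k (pin k (Suc n))) (?R n) = SS k (pop k (rhoP k n)) (?R n)"
    proof (rule SS_cong1)
      fix a :: nat assume a: "a \<in> {0,1,2}"
      have kill: "pop k (Kp k n) (mm k (?R n) (Xm k a)) = 0"
        by (rule D_X[OF isR eig a]) simp
      have "pop k (pin k (Suc n) - rhoP k n) (mm k (?R n) (Xm k a)) = 0"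
        by (rule pop_dvd_zero[OF Kp_dvd_diff kill])
      then show "pop k (pin k (Suc n)) (mm k (?R n) (Xm k a)) = pop k (rhoP k n) (mm k (?R n) (Xm k a))"
        by (simp add: pop_diff)
    qed
    also have "\<dots> = sm (gam k n) (?R n)" by (rule SS_rho[OF isR eig]) simp
    finally show ?thesis .
  qed
  have "SS k (pop k (pin k (Suc n))) R = (\<Sum>l\<in>{..n}. SS k (pop k (pin k (Suc n))) (?R l))"
    by (subst dec) (rule SS_Zsum_pop)
  also have "\<dots> = (\<Sum>l\<in>{..n}. if l = n then sm (gam k n) (?R n) else 0)"
    by (rule sum.cong) (auto simp: zero top)
  also have "\<dots> = sm (gam k n) (?R n)" by (simp add: sum.delta')
  finally show ?thesis by (simp add: pinR)
qed

lemma SSn_Tadd: "(SS k ^^ n) (\<lambda>Z. T1 Z + T2 Z) X = (SS k ^^ n) T1 X + (SS k ^^ n) T2 X"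
proof (induction n arbitrary: T1 T2 X)
  case 0 then show ?case by simp
next
  case (Suc n)
  have "SS k (\<lambda>Z. T1 Z + T2 Z) = (\<lambda>Z. SS k T1 Z + SS k T2 Z)" by (simp add: fun_eq_iff SS_Tadd)
  then show ?case using Suc.IH by (simp add: funpow_Suc_right del: funpow.simps)
qed

lemma B_lemma:
  assumes X: "isr k X" and P0: "pop k (Pn k 0) X = 0"
  shows "(SS k ^^ n) (pop k (pin k n)) X = sm (\<Prod>l<n. gam k l) X"
proof (induction n)
  case 0 then show ?case by (simp add: pin_0)
next
  case (Suc n)
  have v: "(SS k ^^ n) (\<lambda>Z. SS k (pop k (pin k (Suc n))) Z - sm (gam k n) (pop k (pin k n) Z)) X = 0"
    by (rule vanish[OF _ X P0]) (simp add: G_lemma)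
  have "(SS k ^^ Suc n) (pop k (pin k (Suc n))) X = (SS k ^^ n) (SS k (pop k (pin k (Suc n)))) X"
    by (simp add: funpow_Suc_right del: funpow.simps)
  also have "\<dots> = (SS k ^^ n) (\<lambda>Z. sm (gam k n) (pop k (pin k n) Z)) X"
    using v unfolding SSn_Tdiff by simp
  also have "\<dots> = sm (gam k n) ((SS k ^^ n) (pop k (pin k n)) X)" by (rule SSn_Tsm)
  also have "\<dots> = sm (\<Prod>l<Suc n. gam k l) X" using Suc.IH by (simp add: sm_sm mult.commute)
  finally show ?case .
qed

lemma Omega_Ik: "Omega k (Ik k) = sm (cc k) (Ik k)"
proof -
  have "Om4 k (Ik k) = C4 k"
    by (simp add: Om4_def C4_def mm_Ik_left mm_Ik_right rel_EF mm_lin sm_add, simp add: fun_eq_iff sm_def)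
  then show ?thesis by (simp add: Omega_eq C4_cc sm_sm)
qed

lemma Ik_P0: "pop k (Pn k 0) (Ik k) = 0"
proof -
  have "Pn k 0 = [:- lam k 0, 1:]" by (simp add: Pn_def)
  moreover have "lam k 0 = cc k" by (simp add: lam_def)
  ultimately show ?thesis by (simp add: pop_lin1 Omega_Ik sm_def fun_eq_iff)
qed

lemma GG_low: "j < n \<Longrightarrow> (SS k ^^ j) (pop k (pin k n)) (Ik k) = 0"
  by (rule vanish[OF _ isr_Ik Ik_P0]) (rule pop_dvd_zero[OF Pn_dvd_pin])

lemma GG_top: "(SS k ^^ n) (pop k (pin k n)) (Ik k) = sm (\<Prod>l<n. gam k l) (Ik k)"
  by (rule B_lemma[OF isr_Ik Ik_P0])

lemma pop_one_fun: "pop k 1 = (\<lambda>Z. Z)" by (rule ext) simp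

lemma GG_one: "(SS k ^^ j) (pop k 1) (Ik k) = sm (cc k ^ j) (Ik k)"
proof (induction j)
  case 0 then show ?case by simp
next
  case (Suc j)
  have "(SS k ^^ Suc j) (pop k 1) (Ik k) = (SS k ^^ j) (SS k (pop k 1)) (Ik k)"
    by (simp add: funpow_Suc_right del: funpow.simps)
  also have "\<dots> = (SS k ^^ j) (\<lambda>Z. sm (cc k) (pop k 1 Z)) (Ik k)"
    by (rule SSn_cong) (simp_all add: T_S0 pop_one_fun)
  also have "\<dots> = sm (cc k) ((SS k ^^ j) (pop k 1) (Ik k))" by (rule SSn_Tsm)
  also have "\<dots> = sm (cc k ^ Suc j) (Ik k)" unfolding Suc.IH by (simp only: sm_sm power_Suc)
  finally show ?case .
qed

lemma sum_PiE_insert: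
  assumes "x \<notin> L" "finite L"
  shows "(\<Sum>\<phi>\<in>PiE (insert x L) S. G \<phi>) = (\<Sum>y\<in>S x. \<Sum>\<phi>\<in>PiE L S. G (\<phi>(x := y)))"
proof -
  have "(\<Sum>\<phi>\<in>PiE (insert x L) S. G \<phi>) = (\<Sum>\<phi>\<in>(\<lambda>(y, g). g(x := y)) ` (S x \<times> PiE L S). G \<phi>)"
    by (simp add: PiE_insert_eq)
  also have "\<dots> = (\<Sum>p\<in>S x \<times> PiE L S. G ((\<lambda>(y, g). g(x := y)) p))"
    by (rule sum.reindex[OF inj_combinator[OF assms(1)], unfolded comp_def])
  also have "\<dots> = (\<Sum>y\<in>S x. \<Sum>\<phi>\<in>PiE L S. G (\<phi>(x := y)))"
    unfolding sum.cartesian_product by (rule sum.cong) auto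
  finally show ?thesis .
qed

lemma sum_PiE_image:
  assumes "inj f" "finite L"
  shows "(\<Sum>\<phi>\<in>PiE (f ` L) (\<lambda>_. S). G (\<phi> \<circ> f)) = (\<Sum>\<psi>\<in>PiE L (\<lambda>_. S). G \<psi>)"
  using assms(2)
proof (induction L arbitrary: G rule: finite_induct)
  case empty
  have "(\<lambda>_. undefined) \<circ> f = (\<lambda>_. undefined)" by (simp add: comp_def)
  then show ?case by simp
next
  case (insert x L)
  have fx: "f x \<notin> f ` L" using insert.hyps assms(1) by (auto simp: inj_def)
  have "(\<Sum>\<phi>\<in>PiE (f ` insert x L) (\<lambda>_. S). G (\<phi> \<circ> f))
      = (\<Sum>y\<in>S. \<Sum>\<phi>\<in>PiE (f ` L) (\<lambda>_. S). G ((\<phi>(f x := y)) \<circ> f))"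
    using sum_PiE_insert[OF fx finite_imageI[OF insert.hyps(1)], where S="\<lambda>_. S" and G="\<lambda>\<phi>. G (\<phi> \<circ> f)"] by simp
  also have "\<dots> = (\<Sum>y\<in>S. \<Sum>\<phi>\<in>PiE (f ` L) (\<lambda>_. S). G ((\<phi> \<circ> f)(x := y)))"
  proof -
    have e: "(\<phi>(f x := y)) \<circ> f = (\<phi> \<circ> f)(x := y)" for \<phi> y
      using assms(1) by (auto simp: fun_eq_iff inj_def)
    show ?thesis by (simp only: e)
  qed
  also have "\<dots> = (\<Sum>y\<in>S. \<Sum>\<psi>\<in>PiE L (\<lambda>_. S). G (\<psi>(x := y)))"
  proof (rule sum.cong[OF refl])
    fix y show "(\<Sum>\<phi>\<in>PiE (f ` L) (\<lambda>_. S). G ((\<phi> \<circ> f)(x := y))) = (\<Sum>\<psi>\<in>PiE L (\<lambda>_. S). G (\<psi>(x := y)))"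
      by (rule insert.IH[where G="\<lambda>\<psi>. G (\<psi>(x := y))"])
  qed
  also have "\<dots> = (\<Sum>\<psi>\<in>PiE (insert x L) (\<lambda>_. S). G \<psi>)"
    using sum_PiE_insert[OF insert.hyps(2,1), where S="\<lambda>_. S" and G=G] by simp
  finally show ?case .
qed

definition merge :: "'a set \<Rightarrow> ('a \<Rightarrow> 'b) \<Rightarrow> ('a \<Rightarrow> 'b) \<Rightarrow> 'a \<Rightarrow> 'b" where
  "merge A f g = (\<lambda>x. if x \<in> A then f x else g x)"

lemma merge_empty[simp]: "merge {} f g = g" by (simp add: merge_def)

lemma sum_PiE_Un:
  assumes "finite A" "finite B" "A \<inter> B = {}"
  shows "(\<Sum>\<phi>\<in>PiE (A \<union> B) S. G \<phi>) = (\<Sum>\<phi>1\<in>PiE A S. \<Sum>\<phi>2\<in>PiE B S. G (merge A \<phi>1 \<phi>2))"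
  using assms
proof (induction A arbitrary: G rule: finite_induct)
  case empty
  then show ?case by simp
next
  case (insert x A)
  have xAB: "x \<notin> A \<union> B" using insert by auto
  have "(\<Sum>\<phi>\<in>PiE (insert x A \<union> B) S. G \<phi>) = (\<Sum>\<phi>\<in>PiE (insert x (A \<union> B)) S. G \<phi>)" by simp
  also have "\<dots> = (\<Sum>y\<in>S x. \<Sum>\<phi>\<in>PiE (A \<union> B) S. G (\<phi>(x := y)))"
    by (rule sum_PiE_insert[OF xAB]) (use insert in auto)
  also have "\<dots> = (\<Sum>y\<in>S x. \<Sum>\<phi>1\<in>PiE A S. \<Sum>\<phi>2\<in>PiE B S. G ((merge A \<phi>1 \<phi>2)(x := y)))"
    using insert.IH insert.prems by auto
  also have "\<dots> = (\<Sum>y\<in>S x. \<Sum>\<phi>1\<in>PiE A S. \<Sum>\<phi>2\<in>PiE B S. G (merge (insert x A) (\<phi>1(x := y)) \<phi>2))"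
  proof -
    have e: "(merge A \<phi>1 \<phi>2)(x := y) = merge (insert x A) (\<phi>1(x := y)) \<phi>2" for \<phi>1 \<phi>2 y
      by (auto simp: merge_def fun_eq_iff)
    show ?thesis by (simp only: e)
  qed
  also have "\<dots> = (\<Sum>\<phi>1\<in>PiE (insert x A) S. \<Sum>\<phi>2\<in>PiE B S. G (merge (insert x A) \<phi>1 \<phi>2))"
    using sum_PiE_insert[OF insert.hyps(2,1), where S=S and G="\<lambda>\<phi>1. \<Sum>\<phi>2\<in>PiE B S. G (merge (insert x A) \<phi>1 \<phi>2)"]
    by simp
  finally show ?case .
qed

definition relLs :: "nat \<Rightarrow> nat" where "relLs = relL"

lemma inj_relL: "inj relL" by (auto simp: inj_def relL_def)
lemma inj_relR: "inj relR" by (auto simp: inj_def relR_def)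
lemma relLR_disj: "relL x \<noteq> relR y" by (simp add: relL_def relR_def) presburger

lemma sum_PiE_LR:
  assumes "finite A" "finite B"
  shows "(\<Sum>\<phi>\<in>PiE (relL ` A \<union> relR ` B) (\<lambda>_. S). F (\<phi> \<circ> relL) (\<phi> \<circ> relR))
       = (\<Sum>\<phi>1\<in>PiE A (\<lambda>_. S). \<Sum>\<phi>2\<in>PiE B (\<lambda>_. S). F \<phi>1 \<phi>2)"
proof -
  have disj: "relL ` A \<inter> relR ` B = {}" using relLR_disj by auto
  have "(\<Sum>\<phi>\<in>PiE (relL ` A \<union> relR ` B) (\<lambda>_. S). F (\<phi> \<circ> relL) (\<phi> \<circ> relR))
      = (\<Sum>\<phi>1\<in>PiE (relL ` A) (\<lambda>_. S). \<Sum>\<phi>2\<in>PiE (relR ` B) (\<lambda>_. S).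
           F (merge (relL ` A) \<phi>1 \<phi>2 \<circ> relL) (merge (relL ` A) \<phi>1 \<phi>2 \<circ> relR))"
    by (rule sum_PiE_Un) (use assms disj in auto)
  also have "\<dots> = (\<Sum>\<phi>1\<in>PiE (relL ` A) (\<lambda>_. S). \<Sum>\<phi>2\<in>PiE (relR ` B) (\<lambda>_. S). F (\<phi>1 \<circ> relL) (\<phi>2 \<circ> relR))"
  proof (intro sum.cong refl)
    fix \<phi>1 \<phi>2 assume p1: "\<phi>1 \<in> PiE (relL ` A) (\<lambda>_. S)" and p2: "\<phi>2 \<in> PiE (relR ` B) (\<lambda>_. S)"
    have a: "merge (relL ` A) \<phi>1 \<phi>2 \<circ> relL = \<phi>1 \<circ> relL"
    proof
      fix x
      show "(merge (relL ` A) \<phi>1 \<phi>2 \<circ> relL) x = (\<phi>1 \<circ> relL) x"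
      proof (cases "relL x \<in> relL ` A")
        case False
        moreover have "relL x \<notin> relR ` B" using relLR_disj by auto
        ultimately show ?thesis using p1 p2 by (auto simp: merge_def PiE_def extensional_def)
      qed (simp add: merge_def)
    qed
    have b: "merge (relL ` A) \<phi>1 \<phi>2 \<circ> relR = \<phi>2 \<circ> relR"
      using relLR_disj by (auto simp: merge_def fun_eq_iff) (metis relLR_disj)
    show "F (merge (relL ` A) \<phi>1 \<phi>2 \<circ> relL) (merge (relL ` A) \<phi>1 \<phi>2 \<circ> relR) = F (\<phi>1 \<circ> relL) (\<phi>2 \<circ> relR)"
      by (simp add: a b)
  qed
  also have "\<dots> = (\<Sum>\<phi>1\<in>PiE A (\<lambda>_. S). \<Sum>\<phi>2\<in>PiE (relR ` B) (\<lambda>_. S). F \<phi>1 (\<phi>2 \<circ> relR))"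
    by (rule sum_PiE_image[OF inj_relL assms(1), of "\<lambda>\<psi>. \<Sum>\<phi>2\<in>PiE (relR ` B) (\<lambda>_. S). F \<psi> (\<phi>2 \<circ> relR)"])
  also have "\<dots> = (\<Sum>\<phi>1\<in>PiE A (\<lambda>_. S). \<Sum>\<phi>2\<in>PiE B (\<lambda>_. S). F \<phi>1 \<phi>2)"
    by (rule sum.cong[OF refl], rule sum_PiE_image[OF inj_relR assms(2)])
  finally show ?thesis .
qed

fun Wd :: "nat \<Rightarrow> (nat \<Rightarrow> nat) \<Rightarrow> nat list \<Rightarrow> cmat" where
  "Wd k \<phi> [] = Ik k"
| "Wd k \<phi> (l # w) = mm k (Xm k (\<phi> l)) (Wd k \<phi> w)"

lemma isr_Wd[simp]: "isr k (Wd k \<phi> w)" by (cases w) auto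

lemma wordmat_Wd: "i \<le> k \<Longrightarrow> j \<le> k \<Longrightarrow> wordmat k \<phi> w i j = Wd k \<phi> w i j"
proof (induction w arbitrary: i)
  case Nil then show ?case by (simp add: Ik_def)
next
  case (Cons l w)
  have "wordmat k \<phi> (l # w) i j = (\<Sum>m\<le>k. rho k (\<phi> l) i m * wordmat k \<phi> w m j)" by simp
  also have "\<dots> = (\<Sum>m\<le>k. Xm k (\<phi> l) i m * Wd k \<phi> w m j)"
    by (rule sum.cong) (use Cons in \<open>auto simp: Xm_def\<close>)
  finally show ?case using Cons.prems by (simp add: mm_def)
qed

lemma Wd_append: "Wd k \<phi> (u @ w) = mm k (Wd k \<phi> u) (Wd k \<phi> w)"
  by (induction u) (simp_all add: mm_Ik_left mm_assoc)

lemma Wd_map: "Wd k \<phi> (map f w) = Wd k (\<phi> \<circ> f) w"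
  by (induction w) simp_all

lemma Wd_cong: "(\<And>l. l \<in> set w \<Longrightarrow> \<phi> l = \<psi> l) \<Longrightarrow> Wd k \<phi> w = Wd k \<psi> w"
  by (induction w) simp_all

definition labels :: "share \<Rightarrow> nat set" where "labels s = set (fst s) \<union> set (snd s)"

lemma finite_labels[simp]: "finite (labels s)" by (simp add: labels_def)

abbreviation "S3 \<equiv> (\<lambda>_::nat. {0,1,2::nat})"

definition Op :: "nat \<Rightarrow> share \<Rightarrow> cmat \<Rightarrow> cmat" where
  "Op k s X = (\<Sum>\<phi>\<in>PiE (labels s) S3. mm k (Wd k \<phi> (fst s)) (mm k X (Wd k \<phi> (snd s))))"

definition beta :: "nat \<Rightarrow> share \<Rightarrow> (cmat \<Rightarrow> cmat) \<Rightarrow> complex" where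
  "beta k s T = (\<Sum>\<phi>\<in>PiE (labels s) S3. tr k (mm k (T (Wd k \<phi> (snd s))) (Wd k \<phi> (fst s))))"

definition Ssh :: "nat \<Rightarrow> share \<Rightarrow> (cmat \<Rightarrow> cmat) \<Rightarrow> cmat \<Rightarrow> cmat" where
  "Ssh k s T X = (\<Sum>\<phi>\<in>PiE (labels s) S3. mm k (T (mm k X (Wd k \<phi> (snd s)))) (Wd k \<phi> (fst s)))"

lemma labels_cross: "labels (cross I H) = relL ` labels I \<union> relR ` labels H"
  by (auto simp: labels_def cross_def)

lemma set_join: "set (join I H) = relL ` labels I \<union> relR ` labels H"
  by (auto simp: labels_def join_def)

lemma trace_join: "(\<Sum>r\<le>k. wsl2 k (join I H) r r) = beta k I (Op k H)"
proof -
  have "(\<Sum>r\<le>k. wsl2 k (join I H) r r) = (\<Sum>\<phi>\<in>PiE (set (join I H)) S3. tr k (Wd k \<phi> (join I H)))"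
    unfolding wsl2_def tr_def by (subst sum.swap) (auto intro!: sum.cong simp: wordmat_Wd)
  also have "\<dots> = (\<Sum>\<phi>\<in>PiE (relL ` labels I \<union> relR ` labels H) S3.
      tr k (mm k (Wd k (\<phi> \<circ> relL) (fst I)) (mm k (Wd k (\<phi> \<circ> relR) (fst H))
         (mm k (Wd k (\<phi> \<circ> relL) (snd I)) (Wd k (\<phi> \<circ> relR) (snd H))))))"
    unfolding set_join by (simp add: join_def Wd_append Wd_map)
  also have "\<dots> = (\<Sum>\<phi>1\<in>PiE (labels I) S3. \<Sum>\<phi>2\<in>PiE (labels H) S3.
      tr k (mm k (Wd k \<phi>1 (fst I)) (mm k (Wd k \<phi>2 (fst H)) (mm k (Wd k \<phi>1 (snd I)) (Wd k \<phi>2 (snd H))))))"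
    by (rule sum_PiE_LR[where F="\<lambda>\<phi>1 \<phi>2. tr k (mm k (Wd k \<phi>1 (fst I)) (mm k (Wd k \<phi>2 (fst H))
         (mm k (Wd k \<phi>1 (snd I)) (Wd k \<phi>2 (snd H)))))"]) simp_all
  also have "\<dots> = (\<Sum>\<phi>1\<in>PiE (labels I) S3. \<Sum>\<phi>2\<in>PiE (labels H) S3.
      tr k (mm k (mm k (Wd k \<phi>2 (fst H)) (mm k (Wd k \<phi>1 (snd I)) (Wd k \<phi>2 (snd H)))) (Wd k \<phi>1 (fst I))))"
    by (simp add: tr_mm_comm[of k "Wd k _ (fst I)"])
  also have "\<dots> = beta k I (Op k H)"
    by (simp add: beta_def Op_def mm_sum_left tr_sum)
  finally show ?thesis .
qed

lemma Op_cross: "Op k (cross I H) X = Op k I (Op k H X)"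
proof -
  have "Op k (cross I H) X = (\<Sum>\<phi>\<in>PiE (relL ` labels I \<union> relR ` labels H) S3.
      mm k (mm k (Wd k (\<phi> \<circ> relL) (fst I)) (Wd k (\<phi> \<circ> relR) (fst H)))
        (mm k X (mm k (Wd k (\<phi> \<circ> relR) (snd H)) (Wd k (\<phi> \<circ> relL) (snd I)))))"
    unfolding Op_def labels_cross by (simp add: cross_def Wd_append Wd_map)
  also have "\<dots> = (\<Sum>\<phi>1\<in>PiE (labels I) S3. \<Sum>\<phi>2\<in>PiE (labels H) S3.
      mm k (mm k (Wd k \<phi>1 (fst I)) (Wd k \<phi>2 (fst H))) (mm k X (mm k (Wd k \<phi>2 (snd H)) (Wd k \<phi>1 (snd I)))))"
    by (rule sum_PiE_LR[where F="\<lambda>\<phi>1 \<phi>2. mm k (mm k (Wd k \<phi>1 (fst I)) (Wd k \<phi>2 (fst H)))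
        (mm k X (mm k (Wd k \<phi>2 (snd H)) (Wd k \<phi>1 (snd I))))"]) simp_all
  also have "\<dots> = Op k I (Op k H X)"
    by (simp add: Op_def mm_sum_left mm_sum_right mm_assoc)
  finally show ?thesis .
qed

lemma beta_cross: "beta k (cross I H) T = beta k H (Ssh k I T)"
proof -
  have "beta k (cross I H) T = (\<Sum>\<phi>\<in>PiE (relL ` labels I \<union> relR ` labels H) S3.
      tr k (mm k (T (mm k (Wd k (\<phi> \<circ> relR) (snd H)) (Wd k (\<phi> \<circ> relL) (snd I))))
        (mm k (Wd k (\<phi> \<circ> relL) (fst I)) (Wd k (\<phi> \<circ> relR) (fst H)))))"
    unfolding beta_def labels_cross by (simp add: cross_def Wd_append Wd_map)
  also have "\<dots> = (\<Sum>\<phi>1\<in>PiE (labels I) S3. \<Sum>\<phi>2\<in>PiE (labels H) S3.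
      tr k (mm k (T (mm k (Wd k \<phi>2 (snd H)) (Wd k \<phi>1 (snd I)))) (mm k (Wd k \<phi>1 (fst I)) (Wd k \<phi>2 (fst H)))))"
    by (rule sum_PiE_LR[where F="\<lambda>\<phi>1 \<phi>2. tr k (mm k (T (mm k (Wd k \<phi>2 (snd H)) (Wd k \<phi>1 (snd I))))
        (mm k (Wd k \<phi>1 (fst I)) (Wd k \<phi>2 (fst H))))"]) simp_all
  also have "\<dots> = (\<Sum>\<phi>2\<in>PiE (labels H) S3. \<Sum>\<phi>1\<in>PiE (labels I) S3.
      tr k (mm k (mm k (T (mm k (Wd k \<phi>2 (snd H)) (Wd k \<phi>1 (snd I)))) (Wd k \<phi>1 (fst I))) (Wd k \<phi>2 (fst H))))"
    by (subst sum.swap) (simp add: mm_assoc)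
  also have "\<dots> = beta k H (Ssh k I T)"
    by (simp add: beta_def Ssh_def mm_sum_left tr_sum)
  finally show ?thesis .
qed

lemma labels_Ush: "labels (Ush I) = insert 0 (Suc ` labels I)"
  by (auto simp: labels_def Ush_def)

lemma beta_Ush: "beta k (Ush I) T = beta k I (\<lambda>X. Omega k (T X))"
proof -
  have z: "0 \<notin> Suc ` labels I" by auto
  have "beta k (Ush I) T = (\<Sum>\<phi>\<in>PiE (insert 0 (Suc ` labels I)) S3.
      tr k (mm k (T (Wd k (\<phi> \<circ> Suc) (snd I)))
        (mm k (Xm k (\<phi> 0)) (mm k (Wd k (\<phi> \<circ> Suc) (fst I)) (Xm k (\<phi> 0))))))"
    unfolding beta_def labels_Ush by (simp add: Ush_def Wd_append Wd_map mm_Ik_right)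
  also have "\<dots> = (\<Sum>a\<in>{0,1,2}. \<Sum>\<phi>\<in>PiE (Suc ` labels I) S3.
      tr k (mm k (T (Wd k (\<phi> \<circ> Suc) (snd I)))
        (mm k (Xm k a) (mm k (Wd k (\<phi> \<circ> Suc) (fst I)) (Xm k a)))))"
  proof -
    have e: "(\<phi>(0 := a)) \<circ> Suc = \<phi> \<circ> Suc" for \<phi> :: "nat \<Rightarrow> nat" and a by (auto simp: fun_eq_iff)
    show ?thesis using sum_PiE_insert[OF z finite_imageI[OF finite_labels], where S=S3 and
      G="\<lambda>\<phi>. tr k (mm k (T (Wd k (\<phi> \<circ> Suc) (snd I))) (mm k (Xm k (\<phi> 0)) (mm k (Wd k (\<phi> \<circ> Suc) (fst I)) (Xm k (\<phi> 0)))))"]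
      by (simp only: e fun_upd_same)
  qed
  also have "\<dots> = (\<Sum>a\<in>{0,1,2}. \<Sum>\<psi>\<in>PiE (labels I) S3.
      tr k (mm k (T (Wd k \<psi> (snd I))) (mm k (Xm k a) (mm k (Wd k \<psi> (fst I)) (Xm k a)))))"
    by (rule sum.cong[OF refl], rule sum_PiE_image[OF inj_Suc finite_labels])
  also have "\<dots> = (\<Sum>\<psi>\<in>PiE (labels I) S3. \<Sum>a\<in>{0,1,2}.
      tr k (mm k (mm k (Xm k a) (mm k (T (Wd k \<psi> (snd I))) (Xm k a))) (Wd k \<psi> (fst I))))"
  proof -
    have "tr k (mm k A (mm k (Xm k a) (mm k B (Xm k a)))) = tr k (mm k (mm k (Xm k a) (mm k A (Xm k a))) B)" for A B a
    proof -
      have "tr k (mm k A (mm k (Xm k a) (mm k B (Xm k a)))) = tr k (mm k (mm k (mm k A (Xm k a)) B) (Xm k a))"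
        by (simp add: mm_assoc)
      also have "\<dots> = tr k (mm k (Xm k a) (mm k (mm k A (Xm k a)) B))" by (rule tr_mm_comm)
      finally show ?thesis by (simp add: mm_assoc)
    qed
    then show ?thesis by (subst sum.swap) simp
  qed
  also have "\<dots> = beta k I (\<lambda>X. Omega k (T X))"
    by (simp only: beta_def Omega_def mm_sum_left tr_sum)
  finally show ?thesis .
qed

lemma labels_empty: "labels ([], []) = {}" by (simp add: labels_def)

lemma Op_empty: "isr k X \<Longrightarrow> Op k ([], []) X = X"
  by (simp add: Op_def labels_empty mm_Ik_left mm_Ik_right)

lemma tr_mm_Ik: "tr k (mm k A (Ik k)) = tr k A"
proof -
  have "(\<Sum>m\<le>k. A i m * Ik k m i) = A i i" if "i \<le> k" for i
    using sum_single[of i "\<lambda>m. A i m * Ik k m i" k] that by (simp add: Ik_def)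
  then show ?thesis by (simp add: tr_def mm_def)
qed

lemma beta_empty: "beta k ([], []) T = tr k (T (Ik k))"
  by (simp add: beta_def labels_empty tr_mm_Ik)

lemma labels_bridge: "labels bridge = {0}" by (simp add: labels_def bridge_def)
lemma labels_arch: "labels arch = {0}" by (simp add: labels_def arch_def)

lemma sum_PiE_single: "(\<Sum>\<phi>\<in>PiE {x} S3. G (\<phi> x)) = (\<Sum>a\<in>{0,1,2}. G a)"
proof -
  have "(\<Sum>\<phi>\<in>PiE (insert x {}) S3. G (\<phi> x)) = (\<Sum>a\<in>{0,1,2::nat}. \<Sum>\<phi>\<in>PiE {} S3. G ((\<phi>(x := a)) x))"
    by (rule sum_PiE_insert) auto
  then show ?thesis by simp
qed

lemma Op_bridge: "Op k bridge X = Omega k X"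
proof -
  have "Op k bridge X = (\<Sum>\<phi>\<in>PiE {0} S3. mm k (Xm k (\<phi> 0)) (mm k X (Xm k (\<phi> 0))))"
    by (simp add: Op_def labels_def bridge_def mm_Ik_right)
  also have "\<dots> = Omega k X"
    by (subst sum_PiE_single[where G="\<lambda>a. mm k (Xm k a) (mm k X (Xm k a))"]) (simp add: Omega_def)
  finally show ?thesis .
qed

lemma Ssh_bridge: "Ssh k bridge T X = SS k T X"
proof -
  have "Ssh k bridge T X = (\<Sum>\<phi>\<in>PiE {0} S3. mm k (T (mm k X (Xm k (\<phi> 0)))) (Xm k (\<phi> 0)))"
    by (simp add: Ssh_def labels_def bridge_def mm_Ik_right)
  also have "\<dots> = SS k T X"
    by (subst sum_PiE_single[where G="\<lambda>a. mm k (T (mm k X (Xm k a))) (Xm k a)"]) (simp add: SS_def)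
  finally show ?thesis .
qed

lemma Op_arch: "isr k X \<Longrightarrow> Op k arch X = sm (cc k) X"
proof -
  assume X: "isr k X"
  have "Op k arch X = (\<Sum>\<phi>\<in>PiE {0} S3. mm k (mm k (Xm k (\<phi> 0)) (Xm k (\<phi> 0))) X)"
    using X by (simp add: Op_def labels_def arch_def mm_Ik_right mm_Ik_left mm_assoc)
  also have "\<dots> = (\<Sum>a\<in>{0,1,2}. mm k (mm k (Xm k a) (Xm k a)) X)"
    by (rule sum_PiE_single[where G="\<lambda>a. mm k (mm k (Xm k a) (Xm k a)) X"])
  also have "\<dots> = mm k (Omega k (Ik k)) X"
    by (simp only: Omega_def mm_sum_left mm_Ik_left isr_Xm)
  also have "\<dots> = sm (cc k) X" using X by (simp add: Omega_Ik mm_sm_left mm_Ik_left)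
  finally show ?thesis .
qed

lemma snd_arch_pow: "snd (cross_pow arch i) = []"
  by (induction i) (simp_all add: cross_def arch_def)

lemma Op_arch_pow: "isr k X \<Longrightarrow> Op k (cross_pow arch i) X = sm (cc k ^ i) X"
proof (induction i arbitrary: X)
  case 0 then show ?case by (simp add: Op_empty)
next
  case (Suc i)
  have "Op k (cross_pow arch (Suc i)) X = Op k arch (Op k (cross_pow arch i) X)"
    by (simp add: Op_cross)
  also have "\<dots> = sm (cc k) (sm (cc k ^ i) X)" using Suc by (simp add: Op_arch)
  finally show ?case by (simp add: sm_sm)
qed

lemma Ssh_arch_pow:
  assumes "isr k X" "isr k (T X)"
  shows "Ssh k (cross_pow arch i) T X = sm (cc k ^ i) (T X)"
proof -
  have "Ssh k (cross_pow arch i) T X = mm k (T X) (\<Sum>\<phi>\<in>PiE (labels (cross_pow arch i)) S3. Wd k \<phi> (fst (cross_pow arch i)))"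
    using assms by (simp add: Ssh_def snd_arch_pow mm_Ik_right mm_sum_right)
  also have "(\<Sum>\<phi>\<in>PiE (labels (cross_pow arch i)) S3. Wd k \<phi> (fst (cross_pow arch i))) = Op k (cross_pow arch i) (Ik k)"
    by (simp add: Op_def snd_arch_pow mm_Ik_left mm_Ik_right)
  also have "\<dots> = sm (cc k ^ i) (Ik k)" by (simp add: Op_arch_pow)
  finally show ?thesis using assms by (simp add: mm_sm_right mm_Ik_right)
qed

lemma Op_bridge_pow: "isr k X \<Longrightarrow> Op k (cross_pow bridge m) X = (Omega k ^^ m) X"
proof (induction m arbitrary: X)
  case 0 then show ?case by (simp add: Op_empty)
next
  case (Suc m)
  then show ?case by (simp add: Op_cross Op_bridge)
qed

lemma beta_bridge_pow: "beta k (cross_pow bridge j) T = tr k ((SS k ^^ j) T (Ik k))"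
proof (induction j arbitrary: T)
  case 0 then show ?case by (simp add: beta_empty)
next
  case (Suc j)
  have "beta k (cross_pow bridge (Suc j)) T = beta k (cross_pow bridge j) (SS k T)"
    by (simp add: beta_cross Ssh_bridge[abs_def])
  also have "\<dots> = tr k ((SS k ^^ Suc j) T (Ik k))"
    using Suc by (simp add: funpow_Suc_right del: funpow.simps)
  finally show ?case .
qed

lemma beta_mono:
  assumes "\<And>X. isr k X \<Longrightarrow> isr k (T X)"
  shows "beta k (mono i j) T = cc k ^ i * tr k ((SS k ^^ j) T (Ik k))"
proof -
  have "beta k (mono i j) T = tr k ((SS k ^^ j) (Ssh k (cross_pow arch i) T) (Ik k))"
    by (simp add: mono_def beta_cross beta_bridge_pow)
  also have "(SS k ^^ j) (Ssh k (cross_pow arch i) T) (Ik k) = (SS k ^^ j) (\<lambda>X. sm (cc k ^ i) (T X)) (Ik k)"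
    by (rule SSn_cong) (simp_all add: Ssh_arch_pow assms)
  also have "\<dots> = sm (cc k ^ i) ((SS k ^^ j) T (Ik k))" by (rule SSn_Tsm)
  finally show ?thesis by (simp add: tr_sm)
qed

lemma beta_cong: "(\<And>X. isr k X \<Longrightarrow> T1 X = T2 X) \<Longrightarrow> beta k s T1 = beta k s T2"
  unfolding beta_def by (rule sum.cong) simp_all

lemma count_relL: "count_list (map relL xs) (relL y) = count_list xs y"
  by (rule count_list_map_conv[OF inj_relL])
lemma count_relR: "count_list (map relR xs) (relR y) = count_list xs y"
  by (rule count_list_map_conv[OF inj_relR])
lemma relRL_disj: "relR x \<noteq> relL y" using relLR_disj by metis
lemma count_relL_R: "count_list (map relL xs) (relR y) = 0"
  using relRL_disj by (auto simp: count_list_0_iff)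
lemma count_relR_L: "count_list (map relR xs) (relL y) = 0"
  using relLR_disj by (auto simp: count_list_0_iff)

lemma is_share_cross: "is_share I \<Longrightarrow> is_share H \<Longrightarrow> is_share (cross I H)"
proof -
  assume I: "is_share I" and H: "is_share H"
  show "is_share (cross I H)" unfolding is_share_def
  proof
    fix l
    consider y where "l = relL y" | y where "l = relR y"
      by (metis relL_def relR_def oddE evenE)
    then show "count_list (fst (cross I H) @ snd (cross I H)) l \<in> {0, 2}"
    proof cases
      case 1
      have "count_list (fst (cross I H) @ snd (cross I H)) l = count_list (fst I @ snd I) y"
        by (simp add: 1 cross_def count_relL count_relR_L)
      then show ?thesis using I by (simp add: is_share_def)
    next
      case 2
      have "count_list (fst (cross I H) @ snd (cross I H)) l = count_list (fst H @ snd H) y"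
        by (simp add: 2 cross_def count_relR count_relL_R)
      then show ?thesis using H by (simp add: is_share_def)
    qed
  qed
qed

lemma is_share_bridge_pow: "is_share (cross_pow bridge m)"
proof (induction m)
  case 0 then show ?case by (simp add: is_share_def)
next
  case (Suc m)
  have "is_share bridge" by (simp add: is_share_def bridge_def)
  then show ?case using Suc by (simp add: is_share_cross)
qed

lemma sum_list_upt0: "sum_list (map f [0..<n]) = (\<Sum>j<n. f j)"
  by (induction n) simp_all

lemma sl_concat: "sum_list (concat xss) = sum_list (map sum_list xss)"
  by (induction xss) simp_all

lemma realize_sum:
  "(\<Sum>(a, I)\<leftarrow>realize q. a * G I) =
   (\<Sum>j<Suc (degree q). \<Sum>i<Suc (degree (coeff q j)). coeff (coeff q j) i * G (mono i j))"
  unfolding realize_def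
  by (simp add: sl_concat map_concat comp_def sum_list_upt0)

lemma Uop_sum: "(\<Sum>(a, I)\<leftarrow>Uop X. G a I) = (\<Sum>(a, I)\<leftarrow>X. G a (Ush I))"
proof (induction X)
  case Nil then show ?case by (simp add: Uop_def)
next
  case (Cons x X)
  obtain a I where x: "x = (a, I)" by (cases x)
  show ?case using Cons by (simp add: x Uop_def)
qed

lemma sum_sum_list: "(\<Sum>r\<in>A. sum_list (map (g r) X)) = sum_list (map (\<lambda>x. \<Sum>r\<in>A. g r x) X)"
  by (induction X) (simp_all add: sum.distrib)

lemma sum_list_trace: "(\<Sum>r\<le>k. (\<Sum>(a, I)\<leftarrow>X. a * F I r)) = (\<Sum>(a, I)\<leftarrow>X. a * (\<Sum>r\<le>k. F I r))"
  for F :: "share \<Rightarrow> nat \<Rightarrow> complex"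
proof -
  have "(\<Sum>r\<le>k. (\<Sum>(a, I)\<leftarrow>X. a * F I r)) = sum_list (map (\<lambda>x. \<Sum>r\<le>k. (case x of (a, I) \<Rightarrow> a * F I r)) X)"
    by (rule sum_sum_list)
  also have "\<dots> = (\<Sum>(a, I)\<leftarrow>X. a * (\<Sum>r\<le>k. F I r))"
    by (rule arg_cong[where f=sum_list], rule map_cong) (auto simp: sum_distrib_left)
  finally show ?thesis .
qed

lemma trace_cls: "is_share H \<Longrightarrow> (\<Sum>r\<le>k. cls X H k r r) = (\<Sum>(a, I)\<leftarrow>X. a * beta k I (Op k H))"
  unfolding cls_def
  using sum_list_trace[where k=k and X=X and F="\<lambda>I r. wsl2 k (join I H) r r"] by (simp add: trace_join)

definition GG :: "nat \<Rightarrow> complex poly \<Rightarrow> nat \<Rightarrow> complex" where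
  "GG k p j = tr k ((SS k ^^ j) (pop k p) (Ik k))"

lemma pop_fun_add: "pop k (p1 + p2) = (\<lambda>Z. pop k p1 Z + pop k p2 Z)"
  by (rule ext) (simp add: pop_add)
lemma pop_fun_smult: "pop k (smult a p) = (\<lambda>Z. sm a (pop k p Z))"
  by (rule ext) (simp add: pop_smult)

lemma GG_add: "GG k (p1 + p2) j = GG k p1 j + GG k p2 j"
  by (simp add: GG_def pop_fun_add SSn_Tadd tr_add)
lemma GG_smult: "GG k (smult a p) j = a * GG k p j"
  by (simp add: GG_def pop_fun_smult SSn_Tsm tr_sm)
lemma GG_zero: "GG k 0 j = 0"
  using GG_smult[of k 0 0 j] by simp
lemma GG_diff: "GG k (p1 - p2) j = GG k p1 j - GG k p2 j"
  using GG_add[of k "p1 - p2" p2 j] by simp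
lemma GG_sum: "GG k (\<Sum>i\<in>S. f i) j = (\<Sum>i\<in>S. GG k (f i) j)"
proof (cases "finite S")
  case True then show ?thesis
    by (induction S rule: finite_induct) (simp_all add: GG_zero GG_add)
qed (simp add: GG_zero)

lemma beta_mono_pop:
  "beta k (mono i j) (pop k p) = cc k ^ i * GG k p j"
  by (simp add: beta_mono GG_def)

lemma poly_sum_lt: "(\<Sum>i<Suc (degree r). coeff r i * x ^ i) = poly r (x::complex)"
  by (simp add: poly_altdef lessThan_Suc_atMost)

lemma realize_beta:
  "(\<Sum>(a, I)\<leftarrow>realize q. a * beta k I (pop k p)) =
   (\<Sum>j<Suc (degree q). poly (coeff q j) (cc k) * GG k p j)"
proof -
  have "(\<Sum>(a, I)\<leftarrow>realize q. a * beta k I (pop k p)) =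
     (\<Sum>j<Suc (degree q). \<Sum>i<Suc (degree (coeff q j)). coeff (coeff q j) i * (cc k ^ i * GG k p j))"
    by (simp add: realize_sum beta_mono_pop)
  also have "\<dots> = (\<Sum>j<Suc (degree q). poly (coeff q j) (cc k) * GG k p j)"
  proof (rule sum.cong[OF refl])
    fix j
    show "(\<Sum>i<Suc (degree (coeff q j)). coeff (coeff q j) i * (cc k ^ i * GG k p j)) = poly (coeff q j) (cc k) * GG k p j"
      by (simp only: poly_sum_lt[symmetric] sum_distrib_right mult.assoc)
  qed
  finally show ?thesis .
qed

lemma pop_monom_fun: "pop k (monom 1 m) = (Omega k ^^ m)"
  by (rule ext) (simp add: pop_monom)

lemma monom_lin: "monom 1 i * [:- b, 1:] = monom (1::complex) (Suc i) - smult b (monom 1 i)"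
  by (simp add: mult_pCons_right monom_Suc)

lemma poly_poly_x: "poly (poly q [:0, 1:]) x = (\<Sum>j\<le>degree q. poly (coeff q j) x * x ^ j)" for q :: "complex poly poly"
  by (simp add: poly_altdef[of q] poly_sum poly_mult poly_power)

lemma cc_inj: "inj cc"
proof (rule injI)
  fix a b assume "cc a = cc b"
  then have e: "a * (a + 2) = b * (b + 2)" by (simp add: cc_def del: of_nat_mult of_nat_add)
  show "a = b"
  proof (rule ccontr)
    assume "a \<noteq> b"
    then consider "a < b" | "b < a" by linarith
    then show False
    proof cases
      case 1 then have "a * (a + 2) < b * (b + 2)" by (intro mult_strict_mono) auto
      with e show False by simp
    next
      case 2 then have "b * (b + 2) < a * (a + 2)" by (intro mult_strict_mono) auto
      with e show False by simp
    qed
  qed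
qed

lemma prod_gam_eq:
  fixes x :: complex
  shows "(\<Prod>l<n. (of_nat l + 1) / (2 * of_nat l + 1) * (x - of_nat (l * (l + 2)) / 4))
    = fact n / of_nat (\<Prod>i = 1..n. 2 * i - 1) * (\<Prod>m = 1..n. (x - ((of_nat m)^2 - 1) / 4))"
proof (induction n)
  case 0 then show ?case by simp
next
  case (Suc n)
  have nz: "(of_nat (\<Prod>i = 1..n. 2 * i - 1) :: complex) \<noteq> 0"
    by (simp only: of_nat_eq_0_iff prod_zero_iff) auto
  have n1: "(2 * of_nat n + 1 :: complex) \<noteq> 0"
  proof -
    have "(2 * of_nat n + 1 :: complex) = of_nat (2 * n + 1)" by simp
    then show ?thesis by (simp only: of_nat_eq_0_iff) (simp?)
  qed
  have p1: "(\<Prod>i = 1..Suc n. 2 * i - 1) = (\<Prod>i = 1..n. 2 * i - 1) * (2 * n + 1)"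
    by (simp add: prod.cl_ivl_Suc)
  have p2: "(\<Prod>m = 1..Suc n. (x - ((of_nat m)^2 - 1) / 4)) = (\<Prod>m = 1..n. (x - ((of_nat m)^2 - 1) / 4)) * (x - ((of_nat (Suc n))^2 - 1) / 4)"
    by (simp add: prod.cl_ivl_Suc)
  have t: "(of_nat (Suc n))^2 - 1 = (of_nat (n * (n + 2)) :: complex)"
    by (simp add: power2_eq_square algebra_simps)
  show ?case
    unfolding prod.lessThan_Suc Suc.IH p1 p2 t fact_Suc
    using nz n1 by (simp add: field_simps)
qed

lemma poly_smult_prod_lin: "poly (smult C (\<Prod>m\<in>A. [:b m, 1:])) x = C * (\<Prod>m\<in>A. b m + x)"
  for C x :: complex
  by (simp add: poly_prod)

lemma gam_prod_target:
  "(\<Prod>l<n. gam k l) = poly (smult (fact n / of_nat (\<Prod>i = 1..n. 2 * i - 1))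
          (\<Prod>m = 1..n. [:- ((of_nat m)^2 - 1) / 4, 1:])) (cc k)"
proof -
  have "(\<Prod>l<n. gam k l) = (\<Prod>l<n. (of_nat l + 1) / (2 * of_nat l + 1) * (cc k - of_nat (l * (l + 2)) / 4))"
    by (simp add: gam_def)
  also have "\<dots> = fact n / of_nat (\<Prod>i = 1..n. 2 * i - 1) * (\<Prod>m = 1..n. (cc k - ((of_nat m)^2 - 1) / 4))"
    by (rule prod_gam_eq)
  also have "(\<Prod>m = 1..n. (cc k - ((of_nat m)^2 - 1) / 4)) = (\<Prod>m = 1..n. (- ((of_nat m)^2 - 1) / 4 + cc k))"
    by (rule prod.cong) (simp_all add: field_simps)
  finally show ?thesis by (simp only: poly_smult_prod_lin)
qed

lemma GG_one_val: "GG k 1 j = cc k ^ j * of_nat (k + 1)"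
  by (simp add: GG_def GG_one tr_sm tr_Ik)

lemma main_k:
  fixes n :: nat and q :: "complex poly poly"
  assumes dq: "degree q = n" and lc: "lead_coeff q = 1"
    and hyp: "cls (Uop (realize q)) = cls (realize (smult [:- of_nat (n * (n + 1)) / 2, 1:] q))"
  shows "poly (poly q [:0, 1:]) (cc k) = (\<Prod>l<n. gam k l)"
proof -
  define P :: "complex poly" where "P = [:- of_nat (n * (n + 1)) / 2, 1:]"
  define c where "c = cc k"
  define La where "La p = (\<Sum>j<Suc n. poly (coeff q j) c * GG k p j)" for p
  have Pk: "poly P c = lam k n" by (simp add: P_def lam_def c_def field_simps)
  have Pnz: "P \<noteq> 0" by (simp add: P_def)
  have dsq: "degree (smult P q) = n" using Pnz dq by simp
  have La_add: "La (p1 + p2) = La p1 + La p2" for p1 p2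
    by (simp add: La_def GG_add distrib_left sum.distrib)
  have La_smult: "La (smult a p) = a * La p" for a p
    by (simp add: La_def GG_smult sum_distrib_left algebra_simps)
  have La_diff: "La (p1 - p2) = La p1 - La p2" for p1 p2
    by (simp add: La_def GG_diff right_diff_distrib sum_subtractf)
  have La_sum: "La (\<Sum>i\<in>S. f i) = (\<Sum>i\<in>S. La (f i))" for S and f :: "nat \<Rightarrow> complex poly"
    by (simp add: La_def GG_sum sum_distrib_left sum.swap[of _ S])
  have hypm: "La (monom 1 (Suc m)) = lam k n * La (monom 1 m)" for m
  proof -
    let ?H = "cross_pow bridge m"
    have sh: "is_share ?H" by (rule is_share_bridge_pow)
    have eq: "(\<Sum>r\<le>k. cls (Uop (realize q)) ?H k r r) = (\<Sum>r\<le>k. cls (realize (smult P q)) ?H k r r)"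
      using hyp by (simp add: P_def)
    have L: "(\<Sum>r\<le>k. cls (Uop (realize q)) ?H k r r) = La (monom 1 (Suc m))"
    proof -
      have "(\<Sum>r\<le>k. cls (Uop (realize q)) ?H k r r) = (\<Sum>(a, I)\<leftarrow>Uop (realize q). a * beta k I (Op k ?H))"
        by (rule trace_cls[OF sh])
      also have "\<dots> = (\<Sum>(a, I)\<leftarrow>realize q. a * beta k (Ush I) (Op k ?H))"
        by (rule Uop_sum)
      also have "\<dots> = (\<Sum>(a, I)\<leftarrow>realize q. a * beta k I (pop k (monom 1 (Suc m))))"
      proof -
        have "beta k (Ush I) (Op k ?H) = beta k I (pop k (monom 1 (Suc m)))" for I
          unfolding beta_Ush by (rule beta_cong) (simp add: Op_bridge_pow pop_monom)
        then show ?thesis by simp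
      qed
      also have "\<dots> = La (monom 1 (Suc m))"
        by (simp add: realize_beta La_def dq c_def)
      finally show ?thesis .
    qed
    have R: "(\<Sum>r\<le>k. cls (realize (smult P q)) ?H k r r) = lam k n * La (monom 1 m)"
    proof -
      have "(\<Sum>r\<le>k. cls (realize (smult P q)) ?H k r r) = (\<Sum>(a, I)\<leftarrow>realize (smult P q). a * beta k I (Op k ?H))"
        by (rule trace_cls[OF sh])
      also have "\<dots> = (\<Sum>(a, I)\<leftarrow>realize (smult P q). a * beta k I (pop k (monom 1 m)))"
      proof -
        have "beta k I (Op k ?H) = beta k I (pop k (monom 1 m))" for I
          by (rule beta_cong) (simp add: Op_bridge_pow pop_monom)
        then show ?thesis by simp
      qed
      also have "\<dots> = (\<Sum>j<Suc n. poly (coeff (smult P q) j) c * GG k (monom 1 m) j)"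
        by (simp add: realize_beta dsq dq Pnz c_def)
      also have "\<dots> = (\<Sum>j<Suc n. lam k n * (poly (coeff q j) c * GG k (monom 1 m) j))"
        by (rule sum.cong) (simp_all add: Pk poly_mult)
      also have "\<dots> = lam k n * La (monom 1 m)"
        by (simp only: La_def sum_distrib_left)
      finally show ?thesis .
    qed
    show ?thesis using eq L R by simp
  qed
  have kill: "La (r * [:- lam k n, 1:]) = 0" for r
  proof -
    have "r * [:- lam k n, 1:] = (\<Sum>i\<le>degree r. smult (coeff r i) (monom 1 i * [:- lam k n, 1:]))"
    proof -
      have "r = (\<Sum>i\<le>degree r. smult (coeff r i) (monom 1 i))"
        using poly_as_sum_of_monoms[of r] by (simp add: smult_monom)
      then have "r * [:- lam k n, 1:] = (\<Sum>i\<le>degree r. smult (coeff r i) (monom 1 i)) * [:- lam k n, 1:]"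
        by simp
      also have "\<dots> = (\<Sum>i\<le>degree r. smult (coeff r i) (monom 1 i * [:- lam k n, 1:]))"
        by (simp only: sum_distrib_right mult_smult_left)
      finally show ?thesis .
    qed
    moreover have "La (monom 1 i * [:- lam k n, 1:]) = 0" for i
      by (simp only: monom_lin La_diff La_smult hypm) simp
    ultimately show ?thesis by (simp add: La_sum La_smult)
  qed
  have "[:- lam k n, 1:] dvd (1 - pin k n)"
    by (simp add: poly_eq_0_iff_dvd[symmetric] poly_pin)
  then obtain r where r: "1 - pin k n = [:- lam k n, 1:] * r" by (elim dvdE)
  have "La 1 - La (pin k n) = 0"
    using kill[of r] by (simp add: La_diff[symmetric] r mult.commute)
  then have LL: "La 1 = La (pin k n)" by simp
  have "La 1 = of_nat (k + 1) * poly (poly q [:0, 1:]) c"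
    by (simp add: La_def GG_one_val poly_poly_x dq lessThan_Suc_atMost sum_distrib_left algebra_simps c_def)
  moreover have "La (pin k n) = of_nat (k + 1) * (\<Prod>l<n. gam k l)"
  proof -
    have "La (pin k n) = (\<Sum>j<n. poly (coeff q j) c * GG k (pin k n) j) + poly (coeff q n) c * GG k (pin k n) n"
      by (simp add: La_def)
    also have "(\<Sum>j<n. poly (coeff q j) c * GG k (pin k n) j) = 0"
      by (simp add: GG_def GG_low)
    also have "coeff q n = 1" using lc dq by simp
    also have "GG k (pin k n) n = (\<Prod>l<n. gam k l) * of_nat (k + 1)"
      by (simp add: GG_def GG_top tr_sm tr_Ik)
    finally show ?thesis by simp
  qed
  moreover have knz: "1 + (of_nat k :: complex) \<noteq> 0"
  proof -
    have "1 + (of_nat k :: complex) = of_nat (Suc k)" by simp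
    then show ?thesis by (simp only: of_nat_eq_0_iff) (simp?)
  qed
  ultimately show ?thesis using LL by (simp add: c_def)
qed

theorem lemma13:
  fixes n :: nat and q :: "complex poly poly"
  assumes "degree q = n" and "lead_coeff q = 1"
    and "cls (Uop (realize q)) = cls (realize (smult [:- of_nat (n * (n + 1)) / 2, 1:] q))"
  shows "poly q [:0, 1:] =
    smult (fact n / of_nat (\<Prod>i = 1..n. 2 * i - 1))
          (\<Prod>m = 1..n. [:- ((of_nat m)^2 - 1) / 4, 1:])"
proof -
  let ?A = "poly q [:0, 1:]"
  let ?B = "smult (fact n / of_nat (\<Prod>i = 1..n. 2 * i - 1)) (\<Prod>m = 1..n. [:- ((of_nat m)^2 - 1) / 4, 1:]) :: complex poly"
  have agree: "poly (?A - ?B) (cc k) = 0" for k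
  proof -
    have a: "poly ?A (cc k) = (\<Prod>l<n. gam k l)" by (rule main_k[OF assms])
    have b: "poly ?B (cc k) = (\<Prod>l<n. gam k l)" by (rule gam_prod_target[symmetric])
    show ?thesis by (simp only: poly_diff a b) simp
  qed
  show ?thesis
  proof (rule ccontr)
    assume "?A \<noteq> ?B"
    then have "?A - ?B \<noteq> 0" by simp
    then have "finite {x. poly (?A - ?B) x = 0}" by (rule poly_roots_finite)
    moreover have "range cc \<subseteq> {x. poly (?A - ?B) x = 0}" using agree by auto
    ultimately have "finite (range cc)" by (rule finite_subset[rotated])
    moreover have "infinite (range cc)" using cc_inj by (simp add: range_inj_infinite)
    ultimately show False by simp
  qed
qed

end
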